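(* Let $Y_1,\dots,Y_n$ be jointly distributed (not necessarily independent) nonnegative integer-valued random variables, and let $X_1,\dots,X_n$ be independent Bernoulli random variables taking values $0$ and $1$ such that $\mathbb{E}[X_i]=\mathbb{E}[Y_i]$ for each $i$. Let $P$ be a Poisson random variable with parameter $1$ independent of $Y_1,\dots,Y_n$. Then $X_1+\dots+X_n\le_{cx}P(Y_1+\dots+Y_n)$. In particular, for every $q\ge1$, $\|\sum_{i=1}^n X_i\|_q\le A_q^{1/q}\|\sum_{i=1}^n Y_i\|_q$.
   Context: $X\le_{cx}Y$ means $\mathbb{E}\varphi(X)\le\mathbb{E}\varphi(Y)$ for every convex $\varphi:\mathbb{R}\to\mathbb{R}$ for which both expectations exist. $A_q=\mathbb{E}[P^q]$ for $P$ Poisson with parameter $1$, and $\|Z\|_q=(\mathbb{E}|Z|^q)^{1/q}$. *)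

theory Defs
  imports "HOL-Probability.Probability"
begin

definition cx_le :: "'a measure \<Rightarrow> ('a \<Rightarrow> real) \<Rightarrow> 'b measure \<Rightarrow> ('b \<Rightarrow> real) \<Rightarrow> bool" where
  "cx_le M X N Y \<longleftrightarrow>
     (\<forall>\<phi> :: real \<Rightarrow> real. convex_on UNIV \<phi> \<longrightarrow>
        integrable M (\<lambda>\<omega>. \<phi> (X \<omega>)) \<longrightarrow> integrable N (\<lambda>\<omega>. \<phi> (Y \<omega>)) \<longrightarrow>
        (\<integral>\<omega>. \<phi> (X \<omega>) \<partial>M) \<le> (\<integral>\<omega>. \<phi> (Y \<omega>) \<partial>N))"

definition A_q :: "real \<Rightarrow> real" where
  "A_q q = measure_pmf.expectation (poisson_pmf 1) (\<lambda>k. real k powr q)"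

end

theory Submission
  imports Defs
begin

lemma pmfQ: "pmf (poisson_pmf 1) k = exp (-1) / fact k"
  by simp

lemma Q_integrable_bound:
  fixes f :: "nat \<Rightarrow> real"
  assumes b: "\<And>k. \<bar>f k\<bar> \<le> C * x ^ k" and x: "x \<ge> 0"
  shows "integrable (measure_pmf (poisson_pmf 1)) f"
proof -
  have S: "summable (\<lambda>k. exp (-1) * C * (inverse (fact k) * x ^ k))"
    by (intro summable_mult summable_exp)
  have "summable (\<lambda>k. norm (pmf (poisson_pmf 1) k *\<^sub>R f k))"
  proof (rule summable_comparison_test'[OF S, where N=0])
    fix k :: nat
    have "norm (pmf (poisson_pmf 1) k *\<^sub>R f k) = exp (-1) / fact k * \<bar>f k\<bar>"
      by (simp add: abs_mult)
    also have "\<dots> \<le> exp (-1) / fact k * (C * x ^ k)"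
      by (intro mult_left_mono b) auto
    also have "\<dots> = exp (-1) * C * (inverse (fact k) * x ^ k)"
      by (simp add: field_simps)
    finally show "norm (norm (pmf (poisson_pmf 1) k *\<^sub>R f k)) \<le> exp (-1) * C * (inverse (fact k) * x ^ k)" by simp
  qed
  then show ?thesis
    unfolding measure_pmf_eq_density
    by (subst integrable_density) (auto simp: integrable_count_space_nat_iff)
qed

abbreviation EQ :: "(nat \<Rightarrow> real) \<Rightarrow> real" where
  "EQ f \<equiv> measure_pmf.expectation (poisson_pmf 1) f"

lemma Q_integrable_lin:
  fixes f :: "nat \<Rightarrow> real"
  assumes b: "\<And>k. \<bar>f k\<bar> \<le> a + b * real k"
  shows "integrable (measure_pmf (poisson_pmf 1)) f"
proof (rule Q_integrable_bound[where C="\<bar>a\<bar> + \<bar>b\<bar>" and x=2])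
  fix k :: nat
  have k: "real k \<le> 2 ^ k"
    by (metis less_exp of_nat_le_iff of_nat_numeral of_nat_power less_imp_le)
  have "\<bar>f k\<bar> \<le> \<bar>a\<bar> + \<bar>b\<bar> * real k"
    using b[of k] by (smt (verit) abs_ge_self mult_right_mono of_nat_0_le_iff)
  also have "\<dots> \<le> \<bar>a\<bar> + \<bar>b\<bar> * 2 ^ k"
    using k by (intro add_left_mono mult_left_mono) auto
  also have "\<dots> \<le> (\<bar>a\<bar> + \<bar>b\<bar>) * 2 ^ k"
    using mult_left_mono[of 1 "(2::real)^k" "\<bar>a\<bar>"] by (simp add: distrib_right)
  finally show "\<bar>f k\<bar> \<le> (\<bar>a\<bar> + \<bar>b\<bar>) * 2 ^ k" .
qed simp

lemma Q_int_real: "integrable (measure_pmf (poisson_pmf 1)) real"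
  by (rule Q_integrable_lin[where a=0 and b=1]) simp

lemma Q_mean: "EQ real = 1"
proof -
  have "(\<lambda>k. 1 ^ k /\<^sub>R fact k) sums exp (1::real)" by (rule exp_converges)
  then have "(\<lambda>k. inverse (fact k)) sums exp (1::real)"
    by (simp add: scaleR_conv_of_real divide_inverse)
  then have "(\<lambda>k. exp (-1) * inverse (fact k)) sums (exp (-1) * exp (1::real))"
    by (rule sums_mult)
  then have e: "(\<lambda>k. exp (-1) * inverse (fact k)) sums (1::real)"
    by (simp add: mult_exp_exp)
  have "(\<lambda>k. exp (-1) / fact (Suc k) * real (Suc k)) = (\<lambda>k. exp (-1) * inverse (fact k))"
  proof
    fix k
    have "real (Suc k) / fact (Suc k) = 1 / fact k"
      by (simp add: fact_Suc del: of_nat_Suc)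
    then show "exp (-1) / fact (Suc k) * real (Suc k) = exp (-1) * inverse (fact k)"
      by (metis divide_inverse mult.commute mult.left_commute mult_1)
  qed
  with e have "(\<lambda>k. exp (-1) / fact (Suc k) * real (Suc k)) sums 1"
    by simp
  then have *: "(\<lambda>k. exp (-1) / fact k * real k) sums 1"
    using sums_Suc_iff[of "\<lambda>k. exp (-1) / fact k * real k" 1] by simp
  have "EQ real = (\<integral>n. pmf (poisson_pmf 1) n * real n \<partial>count_space UNIV)"
    unfolding measure_pmf_eq_density by (subst integral_density) auto
  also have "integrable (count_space UNIV) (\<lambda>n. pmf (poisson_pmf 1) n * real n)"
    using * unfolding integrable_count_space_nat_iff by (simp add: sums_iff)
  hence "(\<integral>n. pmf (poisson_pmf 1) n * real n \<partial>count_space UNIV) = 1"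
    using * by (subst integral_count_space_nat) (simp_all add: sums_iff)
  finally show ?thesis .
qed

lemma EQ_affine: "EQ (\<lambda>k. a + b * real k) = a + b"
  using Q_int_real Q_mean by (simp add: Bochner_Integration.integral_add)

definition lg :: "(real \<Rightarrow> real) \<Rightarrow> bool" where
  "lg \<psi> \<longleftrightarrow> (\<exists>a b. \<forall>x\<ge>0. \<bar>\<psi> x\<bar> \<le> a + b * x)"

lemma lg_int:
  assumes "lg \<psi>" "s \<ge> 0" "c \<ge> 0"
  shows "integrable (measure_pmf (poisson_pmf 1)) (\<lambda>k. \<psi> (c + s * real k))"
proof -
  obtain a b where ab: "\<And>x. x \<ge> 0 \<Longrightarrow> \<bar>\<psi> x\<bar> \<le> a + b * x"
    using assms(1) unfolding lg_def by blast
  show ?thesis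
  proof (rule Q_integrable_lin[where a="\<bar>a\<bar> + \<bar>b\<bar> * c" and b="\<bar>b\<bar> * s"])
    fix k :: nat
    have "\<bar>\<psi> (c + s * real k)\<bar> \<le> a + b * (c + s * real k)"
      using assms by (intro ab) auto
    also have "\<dots> \<le> \<bar>a\<bar> + \<bar>b\<bar> * (c + s * real k)"
      using assms by (smt (verit) abs_ge_self mult_right_mono of_nat_0_le_iff zero_le_mult_iff)
    finally show "\<bar>\<psi> (c + s * real k)\<bar> \<le> \<bar>a\<bar> + \<bar>b\<bar> * c + \<bar>b\<bar> * s * real k"
      by (simp add: algebra_simps)
  qed
qed

lemma lg_int': "lg \<psi> \<Longrightarrow> s \<ge> 0 \<Longrightarrow> integrable (measure_pmf (poisson_pmf 1)) (\<lambda>k. \<psi> (s * real k))"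
  using lg_int[of \<psi> s 0] by simp

lemma chord:
  fixes f :: "real \<Rightarrow> real"
  assumes f: "convex_on UNIV f" and ab: "a < b" and y: "y \<le> a \<or> b \<le> y"
  shows "f a + (f b - f a) / (b - a) * (y - a) \<le> f y"
proof -
  define s where "s = (f b - f a) / (b - a)"
  have "f a + s * (y - a) \<le> f y"
  using y
proof
  assume ya: "y \<le> a"
  show ?thesis
  proof (cases "y = a")
    case False
    with ya have "y < a" by simp
    from convex_on_slope_le[OF f _ _ this ab]
    have "(f y - f a) / (y - a) \<le> (f a - f b) / (a - b)" by auto
    then have "(f a - f y) / (a - y) \<le> (f b - f a) / (b - a)"
      by (smt (verit) minus_divide_divide)
    then have "f a - f y \<le> s * (a - y)"
      using \<open>y < a\<close> by (simp add: divide_le_eq s_def)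
    then show ?thesis by (simp add: algebra_simps)
  qed simp
next
  assume yb: "b \<le> y"
  show ?thesis
  proof (cases "y = b")
    case False
    with yb have "b < y" by simp
    from convex_on_slope_le[OF f _ _ ab this]
    have "(f a - f b) / (a - b) \<le> (f a - f y) / (a - y)" by auto
    then have "(f b - f a) / (b - a) \<le> (f y - f a) / (y - a)"
      by (smt (verit) minus_divide_divide)
    then have "s * (y - a) \<le> f y - f a"
      using \<open>b < y\<close> ab by (simp add: le_divide_eq s_def)
    then show ?thesis by (simp add: algebra_simps)
  qed (use ab in \<open>simp add: s_def\<close>)
qed
  then show ?thesis by (simp add: s_def)
qed

corollary chord1:
  fixes f :: "real \<Rightarrow> real"
  assumes f: "convex_on UNIV f" and y: "y \<le> a \<or> a + 1 \<le> y"
  shows "f a + (f (a + 1) - f a) * (y - a) \<le> f y"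
  using chord[OF f, of a "a+1" y] y by simp

definition G :: "(real \<Rightarrow> real) \<Rightarrow> real \<Rightarrow> real" where
  "G \<psi> s = EQ (\<lambda>k. \<psi> (s * real k))"

definition T :: "real \<Rightarrow> (real \<Rightarrow> real) \<Rightarrow> real \<Rightarrow> real" where
  "T p \<psi> x = (1 - p) * \<psi> x + p * \<psi> (x + 1)"

lemma EQ_const[simp]: "EQ (\<lambda>k. c) = c"
  by (simp add: measure_pmf.prob_space)

lemma lg_T:
  assumes "lg \<psi>" "0 \<le> p" "p \<le> 1"
  shows "lg (T p \<psi>)"
proof -
  obtain a b where ab: "\<And>x. x \<ge> 0 \<Longrightarrow> \<bar>\<psi> x\<bar> \<le> a + b * x"
    using assms(1) unfolding lg_def by blast
  have "\<bar>T p \<psi> x\<bar> \<le> (a + \<bar>b\<bar>) + \<bar>b\<bar> * x" if x: "x \<ge> 0" for x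
  proof -
    have "\<bar>T p \<psi> x\<bar> \<le> \<bar>(1 - p) * \<psi> x\<bar> + \<bar>p * \<psi> (x + 1)\<bar>"
      unfolding T_def by (rule abs_triangle_ineq)
    also have "\<dots> = (1 - p) * \<bar>\<psi> x\<bar> + p * \<bar>\<psi> (x + 1)\<bar>"
      using assms by (simp add: abs_mult)
    also have "\<dots> \<le> (1 - p) * (a + b * x) + p * (a + b * (x + 1))"
      using assms x ab[of x] ab[of "x+1"] by (intro add_mono mult_left_mono) auto
    also have "\<dots> = a + b * x + p * b" by (simp add: algebra_simps)
    also have "\<dots> \<le> (a + \<bar>b\<bar>) + \<bar>b\<bar> * x"
    proof -
      have "p * b \<le> p * \<bar>b\<bar>" using assms by (intro mult_left_mono) auto
      also have "\<dots> \<le> \<bar>b\<bar>" using assms by (intro mult_left_le_one_le) auto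
      finally have 1: "p * b \<le> \<bar>b\<bar>" .
      have 2: "b * x \<le> \<bar>b\<bar> * x" using x by (intro mult_right_mono) auto
      from 1 2 show ?thesis by linarith
    qed
    finally show ?thesis .
  qed
  then show ?thesis unfolding lg_def by blast
qed

lemma convex_shift:
  assumes "convex_on UNIV (\<psi> :: real \<Rightarrow> real)"
  shows "convex_on UNIV (\<lambda>x. \<psi> (x + c))"
proof (rule convex_onI)
  fix t x y :: real assume t: "0 < t" "t < 1"
  have "\<psi> ((1 - t) *\<^sub>R x + t *\<^sub>R y + c) = \<psi> ((1 - t) *\<^sub>R (x + c) + t *\<^sub>R (y + c))"
    by (simp add: algebra_simps)
  also have "\<dots> \<le> (1 - t) * \<psi> (x + c) + t * \<psi> (y + c)"
    using t by (intro convex_onD[OF assms]) auto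
  finally show "\<psi> ((1 - t) *\<^sub>R x + t *\<^sub>R y + c) \<le> (1 - t) * \<psi> (x + c) + t * \<psi> (y + c)" .
qed simp

lemma convex_T:
  assumes "convex_on UNIV \<psi>" "0 \<le> p" "p \<le> 1"
  shows "convex_on UNIV (T p \<psi>)"
  unfolding T_def[abs_def]
  using assms convex_shift[OF assms(1), of 1]
  by (intro convex_on_add convex_on_cmul) auto

lemma lg_bound:
  assumes "lg \<psi>"
  obtains a b where "\<And>x. x \<ge> 0 \<Longrightarrow> \<bar>\<psi> x\<bar> \<le> a + b * x"
  using assms unfolding lg_def by blast

definition H :: "(real \<Rightarrow> real) \<Rightarrow> real \<Rightarrow> real" where
  "H \<psi> x = EQ (\<lambda>j. \<psi> (x + real j))"

lemma lg_H:
  assumes "lg \<psi>"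
  shows "lg (H \<psi>)"
proof -
  obtain a b where ab: "\<And>x. x \<ge> 0 \<Longrightarrow> \<bar>\<psi> x\<bar> \<le> a + b * x"
    using assms lg_bound by blast
  have "\<bar>H \<psi> x\<bar> \<le> (a + b) + b * x" if x: "x \<ge> 0" for x
  proof -
    have i1: "integrable (measure_pmf (poisson_pmf 1)) (\<lambda>j. \<psi> (x + 1 * real j))"
      using lg_int[OF assms, of 1 x] x by simp
    have "\<bar>H \<psi> x\<bar> \<le> EQ (\<lambda>j. \<bar>\<psi> (x + real j)\<bar>)"
      unfolding H_def by (rule integral_abs_bound)
    also have "\<dots> \<le> EQ (\<lambda>j. (a + b * x) + b * real j)"
      using i1 x Q_int_real
    proof (intro integral_mono)
      fix j :: nat
      show "\<bar>\<psi> (x + real j)\<bar> \<le> (a + b * x) + b * real j"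
        using ab[of "x + real j"] x by (simp add: algebra_simps)
    qed auto
    also have "\<dots> = (a + b) + b * x" by (subst EQ_affine) simp
    finally show ?thesis .
  qed
  then show ?thesis unfolding lg_def by blast
qed

lemma L0:
  assumes cv: "convex_on UNIV \<psi>" and "lg \<psi>" and x: "x \<ge> 0"
  shows "\<psi> (x + 1) \<le> H \<psi> x"
proof -
  have i1: "integrable (measure_pmf (poisson_pmf 1)) (\<lambda>j. \<psi> (x + 1 * real j))"
    using lg_int[OF assms(2), of 1 x] x by simp
  have "\<psi> (x + 1) = EQ (\<lambda>j. \<psi> x + (\<psi> (x + 1) - \<psi> x) * real j)"
    by (subst EQ_affine) simp
  also have "\<dots> \<le> H \<psi> x"
    unfolding H_def using i1 Q_int_real
  proof (intro integral_mono)
    fix j :: nat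
    show "\<psi> x + (\<psi> (x + 1) - \<psi> x) * real j \<le> \<psi> (x + real j)"
      using chord1[OF cv, of "x + real j" x] by (cases j) auto
  qed auto
  finally show ?thesis .
qed

lemma L1:
  assumes cv: "convex_on UNIV \<psi>" and lg: "lg \<psi>" and m: "m \<ge> 0"
  shows "EQ (\<lambda>k. \<psi> (m * real k + 1)) \<le> G \<psi> (m + 1)"
proof -
  have iA: "integrable (measure_pmf (poisson_pmf 1)) (\<lambda>k. \<psi> (m * real k + 1))"
    using lg_int[OF lg, of m 1] m by (simp add: add.commute)
  have iB: "integrable (measure_pmf (poisson_pmf 1)) (\<lambda>k. H \<psi> (m * real k))"
    using lg_int'[OF lg_H[OF lg], of m] m by simp
  have iC: "integrable (measure_pmf (poisson_pmf 1)) (\<lambda>k. \<psi> ((m + 1) * real k))"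
    using lg_int'[OF lg, of "m+1"] m by simp
  have step: "H \<psi> (m * real k) \<le> m / (m + 1) * \<psi> ((m + 1) * real k) + 1 / (m + 1) * G \<psi> (m + 1)" for k :: nat
  proof -
    have i1: "integrable (measure_pmf (poisson_pmf 1)) (\<lambda>j. \<psi> (m * real k + 1 * real j))"
      using lg_int[OF lg, of 1 "m * real k"] m by simp
    have "H \<psi> (m * real k) \<le> EQ (\<lambda>j. m / (m + 1) * \<psi> ((m + 1) * real k) + 1 / (m + 1) * \<psi> ((m + 1) * real j))"
      unfolding H_def using i1 iC
    proof (intro integral_mono)
      fix j :: nat
      have "\<psi> ((1 - 1 / (m + 1)) *\<^sub>R ((m + 1) * real k) + (1 / (m + 1)) *\<^sub>R ((m + 1) * real j))
          \<le> (1 - 1 / (m + 1)) * \<psi> ((m + 1) * real k) + 1 / (m + 1) * \<psi> ((m + 1) * real j)"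
        using m by (intro convex_onD[OF cv]) auto
      moreover have "(1 - 1 / (m + 1)) *\<^sub>R ((m + 1) * real k) + (1 / (m + 1)) *\<^sub>R ((m + 1) * real j)
          = m * real k + real j"
      proof -
        have e1: "(1 - 1/(m+1)) * ((m+1) * real k) = m * real k"
          using m by (simp add: field_simps)
        have e2: "1/(m+1) * ((m+1) * real j) = real j"
          using m by simp
        show ?thesis by (simp only: real_scaleR_def e1 e2)
      qed
      moreover have "1 - 1 / (m + 1) = m / (m + 1)"
        using m by (simp add: field_simps)
      ultimately show "\<psi> (m * real k + real j) \<le> m / (m + 1) * \<psi> ((m + 1) * real k) + 1 / (m + 1) * \<psi> ((m + 1) * real j)"
        by simp
    qed auto
    also have "\<dots> = m / (m + 1) * \<psi> ((m + 1) * real k) + 1 / (m + 1) * G \<psi> (m + 1)"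
      using iC unfolding G_def by (simp add: Bochner_Integration.integral_add)
    finally show ?thesis .
  qed
  have "EQ (\<lambda>k. \<psi> (m * real k + 1)) \<le> EQ (\<lambda>k. H \<psi> (m * real k))"
    using iA iB by (intro integral_mono L0[OF cv lg]) (use m in auto)
  also have "\<dots> \<le> EQ (\<lambda>k. m / (m + 1) * \<psi> ((m + 1) * real k) + 1 / (m + 1) * G \<psi> (m + 1))"
    using iB iC by (intro integral_mono step) auto
  also have "\<dots> = m / (m + 1) * G \<psi> (m + 1) + 1 / (m + 1) * G \<psi> (m + 1)"
    using iC unfolding G_def by (simp add: Bochner_Integration.integral_add)
  also have "\<dots> = (m / (m + 1) + 1 / (m + 1)) * G \<psi> (m + 1)"
    by (simp add: distrib_right)
  also have "m / (m + 1) + 1 / (m + 1) = 1"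
    using m by (simp add: add_divide_distrib[symmetric])
  finally show ?thesis by simp
qed

lemma G_T:
  assumes lg: "lg \<psi>" and m: "m \<ge> 0"
  shows "G (T p \<psi>) m = (1 - p) * G \<psi> m + p * EQ (\<lambda>k. \<psi> (m * real k + 1))"
proof -
  have iA: "integrable (measure_pmf (poisson_pmf 1)) (\<lambda>k. \<psi> (m * real k + 1))"
    using lg_int[OF lg, of m 1] m by (simp add: add.commute)
  have iC: "integrable (measure_pmf (poisson_pmf 1)) (\<lambda>k. \<psi> (m * real k))"
    using lg_int'[OF lg, of "m"] m by simp
  show ?thesis
    unfolding G_def T_def using iA iC by (simp add: Bochner_Integration.integral_add)
qed

lemma G_T_le:
  assumes cv: "convex_on UNIV \<psi>" and lg: "lg \<psi>" and m: "m \<ge> 0" and p: "0 \<le> p"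
  shows "G (T p \<psi>) m \<le> (1 - p) * G \<psi> m + p * G \<psi> (m + 1)"
  unfolding G_T[OF lg m] using L1[OF cv lg m] p by (simp add: mult_left_mono)

lemma G_mid:
  assumes cv: "convex_on UNIV \<psi>" and lg: "lg \<psi>" and s: "s \<ge> 0"
  shows "2 * G \<psi> (s + 1) \<le> G \<psi> s + G \<psi> (s + 2)"
proof -
  have i: "integrable (measure_pmf (poisson_pmf 1)) (\<lambda>k. \<psi> (c * real k))" if "c \<ge> 0" for c
    using lg_int'[OF lg that] .
  have "EQ (\<lambda>k. 2 * \<psi> ((s + 1) * real k)) \<le> EQ (\<lambda>k. \<psi> (s * real k) + \<psi> ((s + 2) * real k))"
    using i[of "s+1"] i[of s] i[of "s+2"] s
  proof (intro integral_mono)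
    fix k :: nat
    have "\<psi> ((1 - 1/2) *\<^sub>R (s * real k) + (1/2) *\<^sub>R ((s + 2) * real k))
        \<le> (1 - 1/2) * \<psi> (s * real k) + 1/2 * \<psi> ((s + 2) * real k)"
      by (intro convex_onD[OF cv]) auto
    moreover have "(1 - 1/2) *\<^sub>R (s * real k) + (1/2) *\<^sub>R ((s + 2) * real k) = (s + 1) * real k"
      by (simp add: algebra_simps)
    ultimately show "2 * \<psi> ((s + 1) * real k) \<le> \<psi> (s * real k) + \<psi> ((s + 2) * real k)"
      by simp
  qed auto
  then show ?thesis
    using i[of "s+1"] i[of s] i[of "s+2"] s unfolding G_def
    by (simp add: Bochner_Integration.integral_add)
qed

definition poi :: "real \<Rightarrow> nat pmf" where
  "poi a = (if a \<le> 0 then return_pmf 0 else poisson_pmf a)"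

abbreviation EP :: "real \<Rightarrow> (nat \<Rightarrow> real) \<Rightarrow> real" where
  "EP a f \<equiv> measure_pmf.expectation (poi a) f"

lemma poi_1[simp]: "poi 1 = poisson_pmf 1"
  by (simp add: poi_def)

lemma pmf_poi: "a \<ge> 0 \<Longrightarrow> pmf (poi a) k = a ^ k / fact k * exp (-a)"
  by (auto simp: poi_def indicator_def)

lemma EP_const[simp]: "EP a (\<lambda>k. c) = c"
  by (simp add: measure_pmf.prob_space)

lemma poi_integrable_bound:
  fixes f :: "nat \<Rightarrow> real"
  assumes a: "a \<ge> 0" and b: "\<And>k. \<bar>f k\<bar> \<le> C * x ^ k" and x: "x \<ge> 0"
  shows "integrable (measure_pmf (poi a)) f"
proof -
  have S: "summable (\<lambda>k. exp (-a) * C * (inverse (fact k) * (a * x) ^ k))"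
    by (intro summable_mult summable_exp)
  have "summable (\<lambda>k. norm (pmf (poi a) k *\<^sub>R f k))"
  proof (rule summable_comparison_test'[OF S, where N=0])
    fix k :: nat
    have "norm (pmf (poi a) k *\<^sub>R f k) = a ^ k / fact k * exp (-a) * \<bar>f k\<bar>"
      using a by (simp add: abs_mult pmf_poi)
    also have "\<dots> \<le> a ^ k / fact k * exp (-a) * (C * x ^ k)"
      using a by (intro mult_left_mono b) auto
    also have "\<dots> = exp (-a) * C * (inverse (fact k) * (a * x) ^ k)"
      by (simp add: field_simps power_mult_distrib)
    finally show "norm (norm (pmf (poi a) k *\<^sub>R f k)) \<le> exp (-a) * C * (inverse (fact k) * (a * x) ^ k)" by simp
  qed
  then show ?thesis
    unfolding measure_pmf_eq_density
    by (subst integrable_density) (auto simp: integrable_count_space_nat_iff)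
qed

lemma poi_integrable_lin:
  fixes f :: "nat \<Rightarrow> real"
  assumes a: "a \<ge> 0" and b: "\<And>k. \<bar>f k\<bar> \<le> c + d * real k"
  shows "integrable (measure_pmf (poi a)) f"
proof (rule poi_integrable_bound[OF a, where C="\<bar>c\<bar> + \<bar>d\<bar>" and x=2])
  fix k :: nat
  have k: "real k \<le> 2 ^ k"
    by (metis less_exp of_nat_le_iff of_nat_numeral of_nat_power less_imp_le)
  have "\<bar>f k\<bar> \<le> \<bar>c\<bar> + \<bar>d\<bar> * real k"
    using b[of k] by (smt (verit) abs_ge_self mult_right_mono of_nat_0_le_iff)
  also have "\<dots> \<le> \<bar>c\<bar> + \<bar>d\<bar> * 2 ^ k"
    using k by (intro add_left_mono mult_left_mono) auto
  also have "\<dots> \<le> (\<bar>c\<bar> + \<bar>d\<bar>) * 2 ^ k"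
    using mult_left_mono[of 1 "(2::real)^k" "\<bar>c\<bar>"] by (simp add: distrib_right)
  finally show "\<bar>f k\<bar> \<le> (\<bar>c\<bar> + \<bar>d\<bar>) * 2 ^ k" .
qed simp

lemma poi_int_real: "a \<ge> 0 \<Longrightarrow> integrable (measure_pmf (poi a)) real"
  by (rule poi_integrable_lin[where c=0 and d=1]) simp_all

lemma poi_mean:
  assumes a: "a \<ge> 0"
  shows "EP a real = a"
proof -
  have "(\<lambda>k. a ^ k /\<^sub>R fact k) sums exp a" by (rule exp_converges)
  then have "(\<lambda>k. a ^ k * inverse (fact k)) sums exp a"
    by (simp add: scaleR_conv_of_real divide_inverse mult.commute)
  then have "(\<lambda>k. (a * exp (-a)) * (a ^ k * inverse (fact k))) sums ((a * exp (-a)) * exp a)"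
    by (rule sums_mult)
  moreover have "(a * exp (-a)) * exp a = a"
    by (simp add: mult.assoc flip: exp_add)
  ultimately have e: "(\<lambda>k. (a * exp (-a)) * (a ^ k * inverse (fact k))) sums a"
    by simp
  have "(\<lambda>k. a ^ Suc k / fact (Suc k) * exp (-a) * real (Suc k)) = (\<lambda>k. (a * exp (-a)) * (a ^ k * inverse (fact k)))"
  proof
    fix k
    have "real (Suc k) / fact (Suc k) = 1 / fact k"
      by (simp add: fact_Suc del: of_nat_Suc)
    then show "a ^ Suc k / fact (Suc k) * exp (-a) * real (Suc k) = (a * exp (-a)) * (a ^ k * inverse (fact k))"
      by (simp add: divide_inverse mult_ac)
  qed
  with e have "(\<lambda>k. a ^ Suc k / fact (Suc k) * exp (-a) * real (Suc k)) sums a"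
    by simp
  then have *: "(\<lambda>k. a ^ k / fact k * exp (-a) * real k) sums a"
    using sums_Suc_iff[of "\<lambda>k. a ^ k / fact k * exp (-a) * real k" a] by simp
  have "EP a real = (\<integral>n. pmf (poi a) n * real n \<partial>count_space UNIV)"
    unfolding measure_pmf_eq_density by (subst integral_density) auto
  also have "\<dots> = (\<integral>n. a ^ n / fact n * exp (-a) * real n \<partial>count_space UNIV)"
    using a by (simp add: pmf_poi)
  also have "integrable (count_space UNIV) (\<lambda>n. a ^ n / fact n * exp (-a) * real n)"
    using * a unfolding integrable_count_space_nat_iff
    by (simp add: sums_iff)
  hence "(\<integral>n. a ^ n / fact n * exp (-a) * real n \<partial>count_space UNIV) = a"
    using * by (subst integral_count_space_nat) (simp_all add: sums_iff)
  finally show ?thesis .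
qed

lemma EP_affine: "a \<ge> 0 \<Longrightarrow> EP a (\<lambda>k. c + d * real k) = c + d * a"
  using poi_int_real[of a] poi_mean[of a] by (simp add: Bochner_Integration.integral_add)

lemma bind_integral_nonneg:
  fixes f :: "'b \<Rightarrow> real"
  assumes nn: "\<And>y. f y \<ge> 0" and i1: "\<And>x. integrable (measure_pmf (N x)) f"
    and i2: "integrable (measure_pmf M) (\<lambda>x. measure_pmf.expectation (N x) f)"
  shows "integrable (measure_pmf (bind_pmf M N)) f"
    and "measure_pmf.expectation (bind_pmf M N) f = measure_pmf.expectation M (\<lambda>x. measure_pmf.expectation (N x) f)"
proof -
  have inner: "(\<integral>\<^sup>+y. ennreal (f y) \<partial>N x) = ennreal (measure_pmf.expectation (N x) f)" for x
    using i1 nn by (intro nn_integral_eq_integral) auto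
  have outer: "(\<integral>\<^sup>+x. ennreal (measure_pmf.expectation (N x) f) \<partial>M) = ennreal (measure_pmf.expectation M (\<lambda>x. measure_pmf.expectation (N x) f))"
    using i2 nn by (intro nn_integral_eq_integral) (auto intro!: integral_nonneg_AE)
  have nnb: "(\<integral>\<^sup>+y. ennreal (f y) \<partial>bind_pmf M N) = ennreal (measure_pmf.expectation M (\<lambda>x. measure_pmf.expectation (N x) f))"
    by (simp add: inner outer)
  show "integrable (measure_pmf (bind_pmf M N)) f"
    by (rule integrableI_nn_integral_finite[OF _ _ nnb]) (auto simp: nn)
  have "measure_pmf.expectation (bind_pmf M N) f = enn2real (\<integral>\<^sup>+y. ennreal (f y) \<partial>bind_pmf M N)"
    by (rule integral_eq_nn_integral) (auto simp: nn)
  also have "\<dots> = measure_pmf.expectation M (\<lambda>x. measure_pmf.expectation (N x) f)"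
    using nnb i2 nn by (simp add: integral_nonneg_AE)
  finally show "measure_pmf.expectation (bind_pmf M N) f = measure_pmf.expectation M (\<lambda>x. measure_pmf.expectation (N x) f)" .
qed

lemma pmf_map_add:
  fixes i n :: nat
  shows "pmf (map_pmf (\<lambda>j. i + j) q) n = (if i \<le> n then pmf q (n - i) else 0)"
proof (cases "i \<le> n")
  case True
  then have "n = i + (n - i)" by simp
  then have "pmf (map_pmf (\<lambda>j. i + j) q) n = pmf (map_pmf (\<lambda>j. i + j) q) (i + (n - i))" by simp
  also have "\<dots> = pmf q (n - i)"
    by (rule pmf_map_inj') (auto simp: inj_def)
  finally show ?thesis using True by simp
next
  case False
  then have "n \<notin> set_pmf (map_pmf (\<lambda>j. i + j) q)" by auto
  then show ?thesis using False by (simp add: pmf_eq_0_set_pmf)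
qed

lemma exp_minus_add: "exp (-a - b) = exp (-a) * exp (-b :: real)"
  by (simp add: exp_add[symmetric])

lemma poi_conv:
  assumes a: "a \<ge> 0" and b: "b \<ge> 0"
  shows "bind_pmf (poi a) (\<lambda>i. map_pmf (\<lambda>j. i + j) (poi b)) = poi (a + b)"
proof (rule pmf_eqI)
  fix n :: nat
  have "pmf (bind_pmf (poi a) (\<lambda>i. map_pmf (\<lambda>j. i + j) (poi b))) n
      = measure_pmf.expectation (poi a) (\<lambda>i. if i \<le> n then pmf (poi b) (n - i) else 0)"
    by (simp add: pmf_bind pmf_map_add)
  also have "\<dots> = (\<Sum>i\<in>{..n}. pmf (poi a) i *\<^sub>R (if i \<le> n then pmf (poi b) (n - i) else 0))"
    by (rule integral_measure_pmf) (auto split: if_splits)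
  also have "\<dots> = (\<Sum>i\<le>n. a ^ i / fact i * exp (-a) * (b ^ (n - i) / fact (n - i) * exp (-b)))"
    using a b by (intro sum.cong) (auto simp: pmf_poi)
  also have "\<dots> = (\<Sum>i\<le>n. exp (-(a+b)) / fact n * (of_nat (n choose i) * a ^ i * b ^ (n - i)))"
  proof (intro sum.cong refl)
    fix i assume "i \<in> {..n}"
    then have "i \<le> n" by simp
    then have C: "(of_nat (n choose i) :: real) = fact n / (fact i * fact (n - i))"
      by (rule binomial_fact)
    show "a ^ i / fact i * exp (-a) * (b ^ (n - i) / fact (n - i) * exp (-b))
        = exp (-(a+b)) / fact n * (of_nat (n choose i) * a ^ i * b ^ (n - i))"
      unfolding C by (simp add: exp_minus_add)
  qed
  also have "\<dots> = exp (-(a+b)) / fact n * (a + b) ^ n"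
    by (simp add: binomial_ring sum_distrib_left)
  also have "\<dots> = pmf (poi (a + b)) n"
    using a b by (simp add: pmf_poi)
  finally show "pmf (bind_pmf (poi a) (\<lambda>i. map_pmf (\<lambda>j. i + j) (poi b))) n = pmf (poi (a + b)) n" .
qed

lemma conv_inner_int:
  fixes g :: "nat \<Rightarrow> real"
  assumes a: "a \<ge> 0" and b: "b \<ge> 0" and bd: "\<And>k. \<bar>g k\<bar> \<le> c + d * real k"
  shows "integrable (measure_pmf (poi a)) (\<lambda>i. EP b (\<lambda>j. g (i + j)))"
proof (rule poi_integrable_lin[OF a, where c="c + d * b" and d=d])
  fix i :: nat
  have bd': "\<bar>g (i + j)\<bar> \<le> (c + d * real i) + d * real j" for j
    using bd[of "i+j"] by (simp add: algebra_simps)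
  have ib: "integrable (measure_pmf (poi b)) (\<lambda>j. g (i + j))"
    using bd' by (intro poi_integrable_lin[OF b, where c="c + d * real i" and d=d])
  have "\<bar>EP b (\<lambda>j. g (i + j))\<bar> \<le> EP b (\<lambda>j. \<bar>g (i + j)\<bar>)"
    by (rule integral_abs_bound)
  also have "\<dots> \<le> EP b (\<lambda>j. (c + d * real i) + d * real j)"
    using ib poi_int_real[OF b]
  proof (intro integral_mono)
    fix j show "\<bar>g (i + j)\<bar> \<le> (c + d * real i) + d * real j"
      using bd[of "i+j"] by (simp add: algebra_simps)
  qed auto
  also have "\<dots> = c + d * b + d * real i"
    using b by (simp add: EP_affine)
  finally show "\<bar>EP b (\<lambda>j. g (i + j))\<bar> \<le> c + d * b + d * real i" .
qed

lemma conv_nonneg: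
  fixes g :: "nat \<Rightarrow> real"
  assumes a: "a \<ge> 0" and b: "b \<ge> 0" and nn: "\<And>k. g k \<ge> 0" and bd: "\<And>k. \<bar>g k\<bar> \<le> c + d * real k"
  shows "EP (a + b) g = EP a (\<lambda>i. EP b (\<lambda>j. g (i + j)))"
proof -
  have bd': "\<bar>g (i + j)\<bar> \<le> (c + d * real i) + d * real j" for i j
    using bd[of "i+j"] by (simp add: algebra_simps)
  have i1: "integrable (measure_pmf (map_pmf (\<lambda>j. i + j) (poi b))) g" for i
    using bd'[of i] by (simp, intro poi_integrable_lin[OF b, where c="c + d * real i" and d=d])
  have i2: "integrable (measure_pmf (poi a)) (\<lambda>i. measure_pmf.expectation (map_pmf (\<lambda>j. i + j) (poi b)) g)"
    using conv_inner_int[OF a b bd] by simp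
  have "EP (a + b) g = measure_pmf.expectation (bind_pmf (poi a) (\<lambda>i. map_pmf (\<lambda>j. i + j) (poi b))) g"
    by (simp add: poi_conv[OF a b])
  also have "\<dots> = EP a (\<lambda>i. measure_pmf.expectation (map_pmf (\<lambda>j. i + j) (poi b)) g)"
    by (rule bind_integral_nonneg(2)[OF nn i1 i2])
  also have "\<dots> = EP a (\<lambda>i. EP b (\<lambda>j. g (i + j)))"
    by simp
  finally show ?thesis .
qed

lemma EP_conv:
  fixes f :: "nat \<Rightarrow> real"
  assumes a: "a \<ge> 0" and b: "b \<ge> 0" and bd: "\<And>k. \<bar>f k\<bar> \<le> c + d * real k"
  shows "EP (a + b) f = EP a (\<lambda>i. EP b (\<lambda>j. f (i + j)))"
proof -
  define h where "h k = c + d * real k" for k :: nat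
  have hnn: "h k \<ge> 0" for k using bd[of k] unfolding h_def by linarith
  have bg: "\<bar>f k + h k\<bar> \<le> 2 * c + (2 * d) * real k" for k
    using bd[of k] hnn[of k] unfolding h_def by linarith
  have fhnn: "f k + h k \<ge> 0" for k
    using bd[of k] unfolding h_def by linarith
  have bh: "\<bar>h k\<bar> \<le> c + d * real k" for k
    using hnn[of k] unfolding h_def by simp
  have ab: "a + b \<ge> 0" using a b by simp
  have c1: "EP (a + b) (\<lambda>k. f k + h k) = EP a (\<lambda>i. EP b (\<lambda>j. f (i + j) + h (i + j)))"
    using conv_nonneg[OF a b fhnn bg] .
  have c2: "EP (a + b) h = EP a (\<lambda>i. EP b (\<lambda>j. h (i + j)))"
    using conv_nonneg[OF a b hnn bh] .
  have if1: "integrable (measure_pmf (poi x)) f" if "x \<ge> 0" for x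
    using poi_integrable_lin[OF that bd] .
  have ih: "integrable (measure_pmf (poi x)) h" if "x \<ge> 0" for x
    using poi_integrable_lin[OF that bh] .
  have inner: "EP b (\<lambda>j. f (i + j) + h (i + j)) = EP b (\<lambda>j. f (i + j)) + EP b (\<lambda>j. h (i + j))" for i
  proof -
    have bf': "\<bar>f (i + j)\<bar> \<le> (c + d * real i) + d * real j" for j
      using bd[of "i+j"] by (simp add: algebra_simps)
    have bh': "\<bar>h (i + j)\<bar> \<le> (c + d * real i) + d * real j" for j
      using bh[of "i+j"] by (simp add: algebra_simps)
    have "integrable (measure_pmf (poi b)) (\<lambda>j. f (i + j))"
      using bf' by (intro poi_integrable_lin[OF b, where c="c + d * real i" and d=d])
    moreover have "integrable (measure_pmf (poi b)) (\<lambda>j. h (i + j))"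
      using bh' by (intro poi_integrable_lin[OF b, where c="c + d * real i" and d=d])
    ultimately show ?thesis by (rule Bochner_Integration.integral_add)
  qed
  have J1: "integrable (measure_pmf (poi a)) (\<lambda>i. EP b (\<lambda>j. f (i + j)))"
    by (rule conv_inner_int[OF a b bd])
  have J2: "integrable (measure_pmf (poi a)) (\<lambda>i. EP b (\<lambda>j. h (i + j)))"
    by (rule conv_inner_int[OF a b bh])
  have "EP (a + b) f + EP (a + b) h = EP (a + b) (\<lambda>k. f k + h k)"
    using if1[OF ab] ih[OF ab] by (simp add: Bochner_Integration.integral_add)
  also have "\<dots> = EP a (\<lambda>i. EP b (\<lambda>j. f (i + j)) + EP b (\<lambda>j. h (i + j)))"
    unfolding c1 inner ..
  also have "\<dots> = EP a (\<lambda>i. EP b (\<lambda>j. f (i + j))) + EP a (\<lambda>i. EP b (\<lambda>j. h (i + j)))"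
    using J1 J2 by (rule Bochner_Integration.integral_add)
  finally show ?thesis using c2 by simp
qed

definition u :: "(real \<Rightarrow> real) \<Rightarrow> real \<Rightarrow> real" where
  "u \<psi> a = EP a (\<lambda>j. \<psi> (real j))"

lemma lg_nat_bound:
  assumes "lg \<psi>" "c \<ge> 0" "s \<ge> 0"
  obtains C D where "\<And>k. \<bar>\<psi> (c + s * real k)\<bar> \<le> C + D * real k"
proof -
  obtain a b where ab: "\<And>x. x \<ge> 0 \<Longrightarrow> \<bar>\<psi> x\<bar> \<le> a + b * x"
    using assms(1) lg_bound by blast
  have "\<bar>\<psi> (c + s * real k)\<bar> \<le> (a + b * c) + (b * s) * real k" for k
    using ab[of "c + s * real k"] assms by (simp add: algebra_simps)
  then show ?thesis using that by blast
qed

lemma lg_nat_bound0: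
  assumes "lg \<psi>"
  obtains C D where "\<And>k. \<bar>\<psi> (real k)\<bar> \<le> C + D * real k"
  using lg_nat_bound[OF assms, of 0 1] by auto

lemma lg_shift:
  assumes "lg \<psi>" "c \<ge> 0"
  shows "lg (\<lambda>x. \<psi> (c + x))"
proof -
  obtain a b where ab: "\<And>x. x \<ge> 0 \<Longrightarrow> \<bar>\<psi> x\<bar> \<le> a + b * x"
    using assms(1) lg_bound by blast
  have "\<bar>\<psi> (c + x)\<bar> \<le> (a + b * c) + b * x" if "x \<ge> 0" for x
    using ab[of "c + x"] assms that by (simp add: algebra_simps)
  then show ?thesis unfolding lg_def by blast
qed

lemma convex_shift':
  assumes "convex_on UNIV (\<psi> :: real \<Rightarrow> real)"
  shows "convex_on UNIV (\<lambda>x. \<psi> (c + x))"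
  using convex_shift[OF assms, of c] by (simp add: add.commute)

lemma EP_integrable_lg:
  assumes "lg \<psi>" "a \<ge> 0" "c \<ge> 0" "s \<ge> 0"
  shows "integrable (measure_pmf (poi a)) (\<lambda>k. \<psi> (c + s * real k))"
proof -
  obtain C D where "\<And>k. \<bar>\<psi> (c + s * real k)\<bar> \<le> C + D * real k"
    using lg_nat_bound[OF assms(1,3,4)] by blast
  then show ?thesis by (rule poi_integrable_lin[OF assms(2)])
qed

lemma EP_integrable_lg0:
  assumes "lg \<psi>" "a \<ge> 0"
  shows "integrable (measure_pmf (poi a)) (\<lambda>k. \<psi> (real k))"
  using EP_integrable_lg[OF assms, of 0 1] by simp

lemma u_conv:
  assumes "lg \<psi>" "a \<ge> 0" "b \<ge> 0"
  shows "u \<psi> (a + b) = EP a (\<lambda>i. EP b (\<lambda>j. \<psi> (real i + real j)))"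
    and "integrable (measure_pmf (poi a)) (\<lambda>i. EP b (\<lambda>j. \<psi> (real i + real j)))"
proof -
  obtain C D where bd: "\<And>k. \<bar>\<psi> (real k)\<bar> \<le> C + D * real k"
    using lg_nat_bound0[OF assms(1)] by blast
  show "u \<psi> (a + b) = EP a (\<lambda>i. EP b (\<lambda>j. \<psi> (real i + real j)))"
    unfolding u_def using EP_conv[OF assms(2,3), of "\<lambda>k. \<psi> (real k)", OF bd] by simp
  show "integrable (measure_pmf (poi a)) (\<lambda>i. EP b (\<lambda>j. \<psi> (real i + real j)))"
    using conv_inner_int[OF assms(2,3), of "\<lambda>k. \<psi> (real k)", OF bd] by simp
qed

lemma stepA:
  assumes cv: "convex_on UNIV \<psi>" and lg: "lg \<psi>" and a: "a \<ge> 0" and p: "0 \<le> p" "p \<le> 1"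
  shows "u (T p \<psi>) a \<le> u \<psi> (a + p)"
proof -
  have iT: "integrable (measure_pmf (poi a)) (\<lambda>k. T p \<psi> (real k))"
    using EP_integrable_lg0[OF lg_T[OF lg p] a] .
  have "u (T p \<psi>) a \<le> EP a (\<lambda>i. EP p (\<lambda>j. \<psi> (real i + real j)))"
    unfolding u_def using iT u_conv(2)[OF lg a p(1)]
  proof (intro integral_mono)
    fix i :: nat
    have ij: "integrable (measure_pmf (poi p)) (\<lambda>j. \<psi> (real i + 1 * real j))"
      using EP_integrable_lg[OF lg p(1), of "real i" 1] by simp
    have "T p \<psi> (real i) = EP p (\<lambda>j. \<psi> (real i) + (\<psi> (real i + 1) - \<psi> (real i)) * real j)"
      unfolding EP_affine[OF p(1)] by (simp add: T_def algebra_simps)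
    also have "\<dots> \<le> EP p (\<lambda>j. \<psi> (real i + real j))"
      using ij poi_int_real[OF p(1)]
    proof (intro integral_mono)
      fix j :: nat
      show "\<psi> (real i) + (\<psi> (real i + 1) - \<psi> (real i)) * real j \<le> \<psi> (real i + real j)"
        using chord1[OF cv, of "real i + real j" "real i"] by (cases j) auto
    qed auto
    finally show "T p \<psi> (real i) \<le> EP p (\<lambda>j. \<psi> (real i + real j))" .
  qed auto
  also have "\<dots> = u \<psi> (a + p)"
    using u_conv(1)[OF lg a p(1)] by simp
  finally show ?thesis .
qed

lemma EP_density:
  assumes "integrable (measure_pmf (poi a)) f"
  shows "EP a f = (\<integral>j. pmf (poi a) j * f j \<partial>count_space UNIV)"
    and "integrable (count_space UNIV) (\<lambda>j. pmf (poi a) j * f j)"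
proof -
  show "EP a f = (\<integral>j. pmf (poi a) j * f j \<partial>count_space UNIV)"
    unfolding measure_pmf_eq_density by (subst integral_density) auto
  show "integrable (count_space UNIV) (\<lambda>j. pmf (poi a) j * f j)"
    using assms unfolding measure_pmf_eq_density by (subst (asm) integrable_density) auto
qed

lemma pmf_poi_thin:
  assumes th: "0 \<le> \<theta>" "\<theta> \<le> 1" and j: "2 \<le> j"
  shows "pmf (poi \<theta>) j \<le> \<theta> * pmf (poi 1) j"
proof -
  have 1: "\<theta> ^ j \<le> \<theta> ^ 2" using th j by (intro power_decreasing) auto
  have "1 + (\<theta> - 1) \<le> exp (\<theta> - 1)" by (rule exp_ge_add_one_self)
  then have "\<theta> \<le> exp \<theta> * exp (-1)" by (simp add: exp_diff divide_inverse exp_minus)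
  then have 2: "\<theta> * exp (-\<theta>) \<le> exp (-1)"
    by (simp add: exp_minus field_simps)
  have "\<theta> ^ j * exp (-\<theta>) \<le> \<theta> ^ 2 * exp (-\<theta>)"
    using 1 by (intro mult_right_mono) auto
  also have "\<dots> = \<theta> * (\<theta> * exp (-\<theta>))" by (simp add: power2_eq_square)
  also have "\<dots> \<le> \<theta> * exp (-1)" using 2 th by (intro mult_left_mono) auto
  finally have "\<theta> ^ j * exp (-\<theta>) / fact j \<le> \<theta> * exp (-1) / fact j"
    by (intro divide_right_mono) auto
  then show ?thesis using th by (simp add: pmf_poi)
qed

lemma thin_bound:
  assumes cv: "convex_on UNIV \<phi>" and lg: "lg \<phi>" and th: "0 \<le> \<theta>" "\<theta> \<le> 1"
  shows "EP \<theta> (\<lambda>j. \<phi> (real j)) \<le> (1 - \<theta>) * \<phi> 0 + \<theta> * EP 1 (\<lambda>j. \<phi> (real j))"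
proof -
  define \<Delta> where "\<Delta> = \<phi> 1 - \<phi> 0"
  define r where "r j = \<phi> (real j) - \<phi> 0 - \<Delta> * real j" for j :: nat
  have rnn: "r j \<ge> 0" for j
    using chord1[OF cv, of "real j" 0] unfolding r_def \<Delta>_def by (cases j) auto
  have r01: "r j = 0" if "j \<le> 1" for j
    using that unfolding r_def \<Delta>_def by (cases j) auto
  have ir: "integrable (measure_pmf (poi x)) r" if "x \<ge> 0" for x
    unfolding r_def[abs_def] using EP_integrable_lg0[OF lg that] poi_int_real[OF that] by auto
  have dec: "EP x (\<lambda>j. \<phi> (real j)) = \<phi> 0 + \<Delta> * x + EP x r" if x: "x \<ge> 0" for x
  proof -
    have "EP x (\<lambda>j. \<phi> (real j)) = EP x (\<lambda>j. (\<phi> 0 + \<Delta> * real j) + r j)"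
      unfolding r_def by simp
    also have "\<dots> = EP x (\<lambda>j. \<phi> 0 + \<Delta> * real j) + EP x r"
      using ir[OF x] poi_int_real[OF x] by (intro Bochner_Integration.integral_add) auto
    also have "\<dots> = \<phi> 0 + \<Delta> * x + EP x r"
      using x by (simp add: EP_affine)
    finally show ?thesis .
  qed
  have key: "EP \<theta> r \<le> \<theta> * EP 1 r"
  proof -
    have "EP \<theta> r = (\<integral>j. pmf (poi \<theta>) j * r j \<partial>count_space UNIV)"
      by (rule EP_density(1)[OF ir[OF th(1)]])
    also have "\<dots> \<le> (\<integral>j. \<theta> * (pmf (poi 1) j * r j) \<partial>count_space UNIV)"
    proof (rule integral_mono[OF EP_density(2)[OF ir[OF th(1)]] integrable_mult_right[OF EP_density(2)[OF ir[of 1]]]])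
      fix j :: nat
      show "pmf (poi \<theta>) j * r j \<le> \<theta> * (pmf (poi 1) j * r j)"
      proof (cases "j \<le> 1")
        case True then show ?thesis using r01 by simp
      next
        case False
        then have "pmf (poi \<theta>) j \<le> \<theta> * pmf (poi 1) j"
          using pmf_poi_thin[OF th] by simp
        then have "pmf (poi \<theta>) j * r j \<le> (\<theta> * pmf (poi 1) j) * r j"
          using rnn[of j] by (rule mult_right_mono)
        then show ?thesis by (simp only: mult.assoc)
      qed
    qed simp
    also have "\<dots> = \<theta> * (\<integral>j. pmf (poi 1) j * r j \<partial>count_space UNIV)"
      by (rule integral_mult_right_zero)
    also have "\<dots> = \<theta> * EP 1 r"
      using EP_density(1)[OF ir[of 1]] by simp
    finally show ?thesis .
  qed
  have "EP \<theta> (\<lambda>j. \<phi> (real j)) = \<phi> 0 + \<Delta> * \<theta> + EP \<theta> r" by (rule dec[OF th(1)])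
  also have "\<dots> \<le> \<phi> 0 + \<Delta> * \<theta> + \<theta> * EP 1 r" using key by simp
  also have "\<dots> = (1 - \<theta>) * \<phi> 0 + \<theta> * (\<phi> 0 + \<Delta> * 1 + EP 1 r)"
    by (simp add: algebra_simps)
  also have "\<dots> = (1 - \<theta>) * \<phi> 0 + \<theta> * EP 1 (\<lambda>j. \<phi> (real j))"
    using dec[of 1] by simp
  finally show ?thesis .
qed

definition glin :: "(real \<Rightarrow> real) \<Rightarrow> real \<Rightarrow> real" where
  "glin \<psi> l = (1 - (l - of_int \<lfloor>l\<rfloor>)) * G \<psi> (of_int \<lfloor>l\<rfloor>) + (l - of_int \<lfloor>l\<rfloor>) * G \<psi> (of_int \<lfloor>l\<rfloor> + 1)"

lemma stepB:
  assumes cv: "convex_on UNIV \<psi>" and lg: "lg \<psi>" and k: "k \<ge> 0" and th: "0 \<le> \<theta>" "\<theta> \<le> 1"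
  shows "u \<psi> (k + \<theta>) \<le> (1 - \<theta>) * u \<psi> k + \<theta> * u \<psi> (k + 1)"
proof -
  have "u \<psi> (k + \<theta>) = EP k (\<lambda>i. EP \<theta> (\<lambda>j. \<psi> (real i + real j)))"
    by (rule u_conv(1)[OF lg k th(1)])
  also have "\<dots> \<le> EP k (\<lambda>i. (1 - \<theta>) * \<psi> (real i) + \<theta> * EP 1 (\<lambda>j. \<psi> (real i + real j)))"
    using u_conv(2)[OF lg k th(1)] EP_integrable_lg0[OF lg k] u_conv(2)[OF lg k, of 1]
  proof (intro integral_mono)
    fix i :: nat
    show "EP \<theta> (\<lambda>j. \<psi> (real i + real j)) \<le> (1 - \<theta>) * \<psi> (real i) + \<theta> * EP 1 (\<lambda>j. \<psi> (real i + real j))"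
      using thin_bound[OF convex_shift'[OF cv, of "real i"] lg_shift[OF lg, of "real i"] th] by simp
  qed auto
  also have "\<dots> = (1 - \<theta>) * EP k (\<lambda>i. \<psi> (real i)) + \<theta> * EP k (\<lambda>i. EP 1 (\<lambda>j. \<psi> (real i + real j)))"
    using u_conv(2)[OF lg k, of 1] EP_integrable_lg0[OF lg k]
    by (simp add: Bochner_Integration.integral_add)
  also have "\<dots> = (1 - \<theta>) * u \<psi> k + \<theta> * u \<psi> (k + 1)"
    using u_conv(1)[OF lg k, of 1] by (simp add: u_def)
  finally show ?thesis .
qed

lemma EP_EP_int:
  assumes lg: "lg \<psi>" and a: "a \<ge> 0" and b: "b \<ge> 0" and s: "s \<ge> 0"
  shows "integrable (measure_pmf (poi a)) (\<lambda>i. EP b (\<lambda>k. \<psi> (real i + s * real k)))"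
proof -
  obtain A B where ab: "\<And>x. x \<ge> 0 \<Longrightarrow> \<bar>\<psi> x\<bar> \<le> A + B * x"
    using lg lg_bound by blast
  show ?thesis
  proof (rule poi_integrable_lin[OF a, where c="A + B * s * b" and d=B])
    fix i :: nat
    have "\<bar>EP b (\<lambda>k. \<psi> (real i + s * real k))\<bar> \<le> EP b (\<lambda>k. \<bar>\<psi> (real i + s * real k)\<bar>)"
      by (rule integral_abs_bound)
    also have "\<dots> \<le> EP b (\<lambda>k. (A + B * real i) + (B * s) * real k)"
      using EP_integrable_lg[OF lg b, of "real i" s] s poi_int_real[OF b]
    proof (intro integral_mono)
      fix k :: nat
      show "\<bar>\<psi> (real i + s * real k)\<bar> \<le> (A + B * real i) + (B * s) * real k"
        using ab[of "real i + s * real k"] s by (simp add: algebra_simps)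
    qed auto
    also have "\<dots> = A + B * s * b + B * real i"
      using b by (simp add: EP_affine)
    finally show "\<bar>EP b (\<lambda>k. \<psi> (real i + s * real k))\<bar> \<le> A + B * s * b + B * real i" .
  qed
qed

lemma poi_0: "poi 0 = return_pmf 0"
  by (simp add: poi_def)

lemma stepC:
  fixes m :: nat
  shows "convex_on UNIV \<psi> \<Longrightarrow> lg \<psi> \<Longrightarrow> u \<psi> (real m) \<le> G \<psi> (real m)"
proof (induction m arbitrary: \<psi>)
  case 0
  then show ?case by (simp add: u_def G_def poi_0)
next
  case (Suc m)
  note cv = Suc.prems(1) and lg = Suc.prems(2)
  define M where "M = real m"
  have M0: "M \<ge> 0" by (simp add: M_def)
  have IH: "EP M (\<lambda>j. \<psi> (real i + real j)) \<le> EP 1 (\<lambda>k. \<psi> (real i + M * real k))" for i :: nat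
    using Suc.IH[OF convex_shift'[OF cv, of "real i"] lg_shift[OF lg, of "real i"]]
    by (simp add: u_def G_def M_def)
  have inner: "EP 1 (\<lambda>k. \<psi> (real i + M * real k))
      \<le> M / (M + 1) * G \<psi> (M + 1) + 1 / (M + 1) * \<psi> ((M + 1) * real i)" for i :: nat
  proof -
    have iC: "integrable (measure_pmf (poi 1)) (\<lambda>k. \<psi> ((M + 1) * real k))"
      using EP_integrable_lg[OF lg, of 1 0 "M+1"] M0 by simp
    have "EP 1 (\<lambda>k. \<psi> (real i + M * real k))
        \<le> EP 1 (\<lambda>k. M / (M + 1) * \<psi> ((M + 1) * real k) + 1 / (M + 1) * \<psi> ((M + 1) * real i))"
      using EP_integrable_lg[OF lg, of 1 "real i" M] M0 iC
    proof (intro integral_mono)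
      fix k :: nat
      have "\<psi> ((1 - 1 / (M + 1)) *\<^sub>R ((M + 1) * real k) + (1 / (M + 1)) *\<^sub>R ((M + 1) * real i))
          \<le> (1 - 1 / (M + 1)) * \<psi> ((M + 1) * real k) + 1 / (M + 1) * \<psi> ((M + 1) * real i)"
        using M0 by (intro convex_onD[OF cv]) auto
      moreover have "(1 - 1 / (M + 1)) *\<^sub>R ((M + 1) * real k) + (1 / (M + 1)) *\<^sub>R ((M + 1) * real i)
          = real i + M * real k"
      proof -
        have e1: "(1 - 1/(M+1)) * ((M+1) * real k) = M * real k"
          using M0 by (simp add: field_simps)
        have e2: "1/(M+1) * ((M+1) * real i) = real i"
          using M0 by simp
        have "(1 - 1 / (M + 1)) *\<^sub>R ((M + 1) * real k) + (1 / (M + 1)) *\<^sub>R ((M + 1) * real i)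
          = M * real k + real i" by (simp only: real_scaleR_def e1 e2)
        then show ?thesis by simp
      qed
      moreover have "1 - 1 / (M + 1) = M / (M + 1)"
        using M0 by (simp add: field_simps)
      ultimately show "\<psi> (real i + M * real k) \<le> M / (M + 1) * \<psi> ((M + 1) * real k) + 1 / (M + 1) * \<psi> ((M + 1) * real i)"
        by simp
    qed auto
    also have "\<dots> = M / (M + 1) * G \<psi> (M + 1) + 1 / (M + 1) * \<psi> ((M + 1) * real i)"
      using iC unfolding G_def by (simp add: Bochner_Integration.integral_add)
    finally show ?thesis .
  qed
  have iD: "integrable (measure_pmf (poi 1)) (\<lambda>i. \<psi> ((M + 1) * real i))"
    using EP_integrable_lg[OF lg, of 1 0 "M+1"] M0 by simp
  have "u \<psi> (real (Suc m)) = u \<psi> (1 + M)" by (simp add: M_def)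
  also have "\<dots> = EP 1 (\<lambda>i. EP M (\<lambda>j. \<psi> (real i + real j)))"
    by (rule u_conv(1)[OF lg _ M0]) simp
  also have "\<dots> \<le> EP 1 (\<lambda>i. EP 1 (\<lambda>k. \<psi> (real i + M * real k)))"
    using u_conv(2)[OF lg _ M0, of 1] EP_EP_int[OF lg _ _ M0, of 1 1]
    by (intro integral_mono IH) auto
  also have "\<dots> \<le> EP 1 (\<lambda>i. M / (M + 1) * G \<psi> (M + 1) + 1 / (M + 1) * \<psi> ((M + 1) * real i))"
    using EP_EP_int[OF lg _ _ M0, of 1 1] iD
    by (intro integral_mono inner) auto
  also have "\<dots> = M / (M + 1) * G \<psi> (M + 1) + 1 / (M + 1) * G \<psi> (M + 1)"
    using iD unfolding G_def by (simp add: Bochner_Integration.integral_add)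
  also have "\<dots> = (M / (M + 1) + 1 / (M + 1)) * G \<psi> (M + 1)"
    by (simp add: distrib_right)
  also have "M / (M + 1) + 1 / (M + 1) = 1"
    using M0 by (simp add: add_divide_distrib[symmetric])
  finally show ?case by (simp add: M_def add.commute)
qed

lemma glin_bound:
  assumes cv: "convex_on UNIV \<psi>" and lg: "lg \<psi>" and l: "l \<ge> 0"
  shows "u \<psi> l \<le> glin \<psi> l"
proof -
  define n where "n = nat \<lfloor>l\<rfloor>"
  have kn: "real_of_int \<lfloor>l\<rfloor> = real n" using l by (simp add: n_def)
  define \<theta> where "\<theta> = l - real n"
  have th: "0 \<le> \<theta>" "\<theta> \<le> 1" unfolding \<theta>_def using kn by linarith+
  have "u \<psi> l = u \<psi> (real n + \<theta>)" by (simp add: \<theta>_def)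
  also have "\<dots> \<le> (1 - \<theta>) * u \<psi> (real n) + \<theta> * u \<psi> (real n + 1)"
    by (rule stepB[OF cv lg _ th]) simp
  also have "\<dots> \<le> (1 - \<theta>) * G \<psi> (real n) + \<theta> * G \<psi> (real n + 1)"
    using stepC[OF cv lg, of n] stepC[OF cv lg, of "Suc n"] th
    by (intro add_mono mult_left_mono) (auto simp: add.commute)
  also have "\<dots> = glin \<psi> l"
    unfolding glin_def kn \<theta>_def ..
  finally show ?thesis .
qed

lemma convex_cont: "convex_on UNIV (\<psi>::real\<Rightarrow>real) \<Longrightarrow> continuous_on UNIV \<psi>"
  by (rule convex_on_continuous) auto

lemma Mside:
  fixes M :: "'a measure" and X :: "nat \<Rightarrow> 'a \<Rightarrow> real" and n :: nat
  assumes PM: "prob_space M"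
    and X_rv: "\<And>i. i < n \<Longrightarrow> X i \<in> borel_measurable M"
    and X_01: "\<And>i \<omega>. i < n \<Longrightarrow> \<omega> \<in> space M \<Longrightarrow> X i \<omega> \<in> {0, 1}"
    and X_indep: "prob_space.indep_vars M (\<lambda>_. borel) X {..<n}"
  shows "k \<le> n \<Longrightarrow> convex_on UNIV \<psi> \<Longrightarrow> lg \<psi> \<Longrightarrow>
    (\<integral>\<omega>. \<psi> (\<Sum>i<k. X i \<omega>) \<partial>M) \<le> u \<psi> (\<Sum>i<k. \<integral>\<omega>. X i \<omega> \<partial>M)"
proof (induction k arbitrary: \<psi>)
  interpret M: prob_space M by (rule PM)
  case 0
  then show ?case by (simp add: u_def poi_0 M.prob_space)
next
  interpret M: prob_space M by (rule PM)
  case (Suc k)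
  note cv = Suc.prems(2) and lg = Suc.prems(3)
  have kn: "k < n" using Suc.prems(1) by simp
  define S where "S \<omega> = (\<Sum>i<k. X i \<omega>)" for \<omega>
  define p where "p = (\<integral>\<omega>. X k \<omega> \<partial>M)"
  define l where "l = (\<Sum>i<k. \<integral>\<omega>. X i \<omega> \<partial>M)"
  have Smeas: "S \<in> borel_measurable M"
    unfolding S_def[abs_def] using X_rv kn by auto
  have Xk: "X k \<in> borel_measurable M" using X_rv kn by auto
  have Xk01: "\<omega> \<in> space M \<Longrightarrow> X k \<omega> \<in> {0,1}" for \<omega> using X_01 kn by auto
  have Xkb: "\<omega> \<in> space M \<Longrightarrow> 0 \<le> X k \<omega> \<and> X k \<omega> \<le> 1" for \<omega>
    using Xk01[of \<omega>] by force
  have Sb: "\<omega> \<in> space M \<Longrightarrow> 0 \<le> S \<omega> \<and> S \<omega> \<le> real k" for \<omega>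
  proof -
    assume \<omega>: "\<omega> \<in> space M"
    have h: "0 \<le> X i \<omega> \<and> X i \<omega> \<le> 1" if "i < k" for i
      using X_01[of i \<omega>] that kn \<omega> by auto
    have A: "0 \<le> S \<omega>" unfolding S_def using h by (auto intro!: sum_nonneg)
    have B: "S \<omega> \<le> (\<Sum>i<k. (1::real))" unfolding S_def
      by (rule sum_mono) (use h in auto)
    show ?thesis using A B by simp
  qed
  have intX: "integrable M (X k)"
  proof (rule M.integrable_const_bound[where B=1])
    show "AE x in M. norm (X k x) \<le> 1"
      by (rule AE_I2) (use Xk01 in force)
  qed (rule Xk)
  have p01: "0 \<le> p" "p \<le> 1"
  proof -
    show "0 \<le> p" unfolding p_def by (intro integral_nonneg_AE AE_I2) (use Xk01 in force)
    have "p \<le> (\<integral>\<omega>. 1 \<partial>M)" unfolding p_def using intX Xkb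
      by (intro integral_mono) auto
    then show "p \<le> 1" by (simp add: M.prob_space)
  qed
  have Xnn: "0 \<le> X i \<omega>" if "i < k" "\<omega> \<in> space M" for i \<omega>
    using X_01[of i \<omega>] that kn by force
  have l0: "l \<ge> 0"
    unfolding l_def using Xnn
    by (intro sum_nonneg integral_nonneg_AE AE_I2) auto
  have int_psi: "integrable M (\<lambda>\<omega>. \<phi> (S \<omega> + c))" if lgf: "lg \<phi>" and cvf: "convex_on UNIV \<phi>" and c0: "c \<ge> 0" for \<phi> c
  proof -
    obtain A B where ab: "\<And>x. x \<ge> 0 \<Longrightarrow> \<bar>\<phi> x\<bar> \<le> A + B * x"
      using lgf lg_bound by blast
    show ?thesis
    proof (rule M.integrable_const_bound[where B="A + \<bar>B\<bar> * (real k + c)"])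
      show "AE x in M. norm (\<phi> (S x + c)) \<le> A + \<bar>B\<bar> * (real k + c)"
      proof (rule AE_I2)
        fix x assume x: "x \<in> space M"
        have "\<bar>\<phi> (S x + c)\<bar> \<le> A + B * (S x + c)"
          using ab[of "S x + c"] Sb[OF x] c0 by auto
        also have "B * (S x + c) \<le> \<bar>B\<bar> * (S x + c)"
          by (rule mult_right_mono) (use Sb[OF x] c0 in auto)
        also have "\<dots> \<le> \<bar>B\<bar> * (real k + c)"
          by (rule mult_left_mono) (use Sb[OF x] in auto)
        finally show "norm (\<phi> (S x + c)) \<le> A + \<bar>B\<bar> * (real k + c)" by simp
      qed
      show "(\<lambda>\<omega>. \<phi> (S \<omega> + c)) \<in> borel_measurable M"
        using borel_measurable_continuous_on[OF convex_cont[OF convex_shift[OF cvf, of c]] Smeas] .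
    qed
  qed
  have i0: "integrable M (\<lambda>\<omega>. \<psi> (S \<omega>))" using int_psi[OF lg cv, of 0] by simp
  have i1: "integrable M (\<lambda>\<omega>. \<psi> (S \<omega> + 1))" using int_psi[OF lg cv, of 1] by simp
  have ind: "M.indep_var borel (X k) borel S"
  proof -
    have "M.indep_vars (\<lambda>_. borel) X (insert k {..<k})"
      by (rule M.indep_vars_subset[OF X_indep]) (use kn in auto)
    then show ?thesis unfolding S_def[abs_def] by (intro M.indep_vars_sum) auto
  qed
  have indc: "M.indep_var borel (X k) borel (\<lambda>\<omega>. \<psi> (S \<omega> + c))" for c
  proof -
    have "(\<lambda>s. \<psi> (s + c)) \<in> borel_measurable borel"
      by (rule borel_measurable_continuous_onI[OF convex_cont[OF convex_shift[OF cv]]])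
    from M.indep_var_compose[OF ind measurable_ident this]
    show ?thesis by (simp add: comp_def)
  qed
  have E0: "(\<integral>\<omega>. X k \<omega> * \<psi> (S \<omega>) \<partial>M) = p * (\<integral>\<omega>. \<psi> (S \<omega>) \<partial>M)"
    using M.indep_var_lebesgue_integral[OF indc[of 0] intX] i0 by (simp add: p_def)
  have E1: "(\<integral>\<omega>. X k \<omega> * \<psi> (S \<omega> + 1) \<partial>M) = p * (\<integral>\<omega>. \<psi> (S \<omega> + 1) \<partial>M)"
    using M.indep_var_lebesgue_integral[OF indc[of 1] intX i1] by (simp add: p_def)
  have ip0: "integrable M (\<lambda>\<omega>. X k \<omega> * \<psi> (S \<omega>))"
    using M.indep_var_integrable[OF indc[of 0] intX] i0 by simp
  have ip1: "integrable M (\<lambda>\<omega>. X k \<omega> * \<psi> (S \<omega> + 1))"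
    using M.indep_var_integrable[OF indc[of 1] intX i1] by simp
  have "(\<integral>\<omega>. \<psi> (\<Sum>i<Suc k. X i \<omega>) \<partial>M)
      = (\<integral>\<omega>. \<psi> (S \<omega>) - X k \<omega> * \<psi> (S \<omega>) + X k \<omega> * \<psi> (S \<omega> + 1) \<partial>M)"
  proof (rule Bochner_Integration.integral_cong[OF refl])
    fix \<omega> assume \<omega>: "\<omega> \<in> space M"
    show "\<psi> (\<Sum>i<Suc k. X i \<omega>) = \<psi> (S \<omega>) - X k \<omega> * \<psi> (S \<omega>) + X k \<omega> * \<psi> (S \<omega> + 1)"
      using Xk01[OF \<omega>] by (auto simp: S_def add.commute)
  qed
  also have "\<dots> = (\<integral>\<omega>. \<psi> (S \<omega>) \<partial>M) - p * (\<integral>\<omega>. \<psi> (S \<omega>) \<partial>M) + p * (\<integral>\<omega>. \<psi> (S \<omega> + 1) \<partial>M)"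
    using i0 ip0 ip1 E0 E1 by simp
  also have "\<dots> = (\<integral>\<omega>. T p \<psi> (S \<omega>) \<partial>M)"
    using i0 i1 by (simp add: T_def algebra_simps)
  also have "\<dots> \<le> u (T p \<psi>) l"
    unfolding S_def l_def
    by (rule Suc.IH) (use kn convex_T[OF cv p01] lg_T[OF lg p01] in auto)
  also have "\<dots> \<le> u \<psi> (l + p)"
    by (rule stepA[OF cv lg l0 p01])
  also have "l + p = (\<Sum>i<Suc k. \<integral>\<omega>. X i \<omega> \<partial>M)"
    by (simp add: l_def p_def)
  finally show ?case .
qed

lemma convex_scale:
  assumes "convex_on UNIV (\<psi> :: real \<Rightarrow> real)"
  shows "convex_on UNIV (\<lambda>y. \<psi> (y * c))"
proof (rule convex_onI)
  fix t x y :: real assume t: "0 < t" "t < 1"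
  have "\<psi> (((1 - t) *\<^sub>R x + t *\<^sub>R y) * c) = \<psi> ((1 - t) *\<^sub>R (x * c) + t *\<^sub>R (y * c))"
    by (simp add: algebra_simps)
  also have "\<dots> \<le> (1 - t) * \<psi> (x * c) + t * \<psi> (y * c)"
    using t by (intro convex_onD[OF assms]) auto
  finally show "\<psi> (((1 - t) *\<^sub>R x + t *\<^sub>R y) * c) \<le> (1 - t) * \<psi> (x * c) + t * \<psi> (y * c)" .
qed simp

lemma Nside:
  fixes N :: "'b measure" and Y :: "nat \<Rightarrow> 'b \<Rightarrow> nat" and P :: "'b \<Rightarrow> nat" and n :: nat
  assumes PN: "prob_space N"
    and Y_rv: "\<And>i. i < n \<Longrightarrow> Y i \<in> measurable N (count_space UNIV)"
    and Y_int: "\<And>i. i < n \<Longrightarrow> integrable N (\<lambda>\<omega>. real (Y i \<omega>))"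
    and P_rv: "P \<in> measurable N (count_space UNIV)"
    and P_poisson: "distr N (count_space UNIV) P = measure_pmf (poisson_pmf 1)"
    and P_indep: "prob_space.indep_set N
                    (sets (vimage_algebra (space N) P (count_space UNIV)))
                    (sets (vimage_algebra (space N) (\<lambda>\<omega>. \<lambda>i\<in>{..<n}. Y i \<omega>)
                       (PiM {..<n} (\<lambda>_. count_space UNIV))))"
  defines "S \<equiv> (\<lambda>\<omega>. \<Sum>i<n. Y i \<omega>)"
  shows "integrable N (\<lambda>\<omega>. real (S \<omega>))"
    and "integrable N (\<lambda>\<omega>. real (P \<omega>) * real (S \<omega>))"
    and "\<And>f. prob_space.indep_var N borel (\<lambda>\<omega>. f (P \<omega>) :: real) borel (\<lambda>\<omega>. real (S \<omega>))"
    and "\<And>f. integrable N (\<lambda>\<omega>. f (P \<omega>)) \<longleftrightarrow> integrable (measure_pmf (poisson_pmf 1)) (f :: nat \<Rightarrow> real)"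
    and "\<And>f. (\<integral>\<omega>. f (P \<omega>) \<partial>N) = EQ (f :: nat \<Rightarrow> real)"
    and "convex_on UNIV \<psi> \<Longrightarrow> lg \<psi> \<Longrightarrow>
         integrable N (\<lambda>\<omega>. \<psi> (real (P \<omega>) * real (S \<omega>))) \<and>
         glin \<psi> (\<integral>\<omega>. real (S \<omega>) \<partial>N) \<le> (\<integral>\<omega>. \<psi> (real (P \<omega>) * real (S \<omega>)) \<partial>N)"
proof -
  interpret N: prob_space N by (rule PN)
  define V where "V \<omega> = (\<lambda>i\<in>{..<n}. Y i \<omega>)" for \<omega>
  have Vm: "V \<in> measurable N (PiM {..<n} (\<lambda>_. count_space UNIV))"
    unfolding V_def using Y_rv by (intro measurable_restrict) auto
  have summ: "(\<lambda>v. real (\<Sum>i<n. v i)) \<in> borel_measurable (PiM {..<n} (\<lambda>_. count_space (UNIV::nat set)))"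
    by measurable
  have Pind: "N.indep_set
      (sigma_sets (space N) {P -` A \<inter> space N | A. A \<in> sets (count_space UNIV)})
      (sigma_sets (space N) {V -` A \<inter> space N | A. A \<in> sets (PiM {..<n} (\<lambda>_. count_space (UNIV::nat set)))})"
    using P_indep unfolding sets_vimage_algebra V_def .
  show ind: "N.indep_var borel (\<lambda>\<omega>. f (P \<omega>)) borel (\<lambda>\<omega>. real (S \<omega>))" for f :: "nat \<Rightarrow> real"
  proof -
    define g where "g = (\<lambda>v. real (\<Sum>i<n. v i))"
    have gV: "(\<lambda>\<omega>. real (S \<omega>)) = (\<lambda>\<omega>. g (V \<omega>))"
      by (auto simp: V_def S_def g_def fun_eq_iff)
    have gm: "g \<in> borel_measurable (PiM {..<n} (\<lambda>_. count_space (UNIV::nat set)))"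
      unfolding g_def by (rule summ)
    have fm: "f \<in> borel_measurable (count_space UNIV)" by measurable
    have rv1: "(\<lambda>\<omega>. f (P \<omega>)) \<in> borel_measurable N"
      using measurable_comp[OF P_rv fm] by (simp add: comp_def)
    have rv2: "(\<lambda>\<omega>. g (V \<omega>)) \<in> borel_measurable N"
      using measurable_comp[OF Vm gm] by (simp add: comp_def)
    have sub1: "sigma_sets (space N) {(\<lambda>\<omega>. f (P \<omega>)) -` A \<inter> space N | A. A \<in> sets borel}
        \<subseteq> sigma_sets (space N) {P -` A \<inter> space N | A. A \<in> sets (count_space UNIV)}"
    proof (rule sigma_sets_subseteq)
      show "{(\<lambda>\<omega>. f (P \<omega>)) -` A \<inter> space N | A. A \<in> sets borel}
          \<subseteq> {P -` A \<inter> space N | A. A \<in> sets (count_space UNIV)}"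
      proof
        fix x assume "x \<in> {(\<lambda>\<omega>. f (P \<omega>)) -` A \<inter> space N | A. A \<in> sets borel}"
        then obtain A where "x = (\<lambda>\<omega>. f (P \<omega>)) -` A \<inter> space N" by blast
        then have "x = P -` (f -` A) \<inter> space N" by auto
        then show "x \<in> {P -` A \<inter> space N | A. A \<in> sets (count_space UNIV)}"
          by (intro CollectI exI[of _ "f -` A"]) simp
      qed
    qed
    have sub2: "sigma_sets (space N) {(\<lambda>\<omega>. g (V \<omega>)) -` A \<inter> space N | A. A \<in> sets borel}
        \<subseteq> sigma_sets (space N) {V -` A \<inter> space N | A. A \<in> sets (PiM {..<n} (\<lambda>_. count_space (UNIV::nat set)))}"
    proof (rule sigma_sets_subseteq)
      show "{(\<lambda>\<omega>. g (V \<omega>)) -` A \<inter> space N | A. A \<in> sets borel}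
          \<subseteq> {V -` A \<inter> space N | A. A \<in> sets (PiM {..<n} (\<lambda>_. count_space (UNIV::nat set)))}"
      proof
        fix x assume "x \<in> {(\<lambda>\<omega>. g (V \<omega>)) -` A \<inter> space N | A. A \<in> sets borel}"
        then obtain A where A: "A \<in> sets borel" "x = (\<lambda>\<omega>. g (V \<omega>)) -` A \<inter> space N" by blast
        have Vs: "\<omega> \<in> space N \<Longrightarrow> V \<omega> \<in> space (PiM {..<n} (\<lambda>_. count_space (UNIV::nat set)))" for \<omega>
          using measurable_space[OF Vm] by blast
        have "x = V -` (g -` A \<inter> space (PiM {..<n} (\<lambda>_. count_space (UNIV::nat set)))) \<inter> space N"
          using A(2) Vs by auto
        moreover have "g -` A \<inter> space (PiM {..<n} (\<lambda>_. count_space (UNIV::nat set))) \<in> sets (PiM {..<n} (\<lambda>_. count_space (UNIV::nat set)))"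
          using measurable_sets[OF gm A(1)] .
        ultimately show "x \<in> {V -` A \<inter> space N | A. A \<in> sets (PiM {..<n} (\<lambda>_. count_space (UNIV::nat set)))}"
          by (intro CollectI exI[of _ "g -` A \<inter> space (PiM {..<n} (\<lambda>_. count_space (UNIV::nat set)))"]) simp
      qed
    qed
    have "N.indep_set
      (sigma_sets (space N) {(\<lambda>\<omega>. f (P \<omega>)) -` A \<inter> space N | A. A \<in> sets borel})
      (sigma_sets (space N) {(\<lambda>\<omega>. g (V \<omega>)) -` A \<inter> space N | A. A \<in> sets borel})"
      using Pind sub1 sub2 unfolding N.indep_sets2_eq by blast
    then have "N.indep_var borel (\<lambda>\<omega>. f (P \<omega>)) borel (\<lambda>\<omega>. g (V \<omega>))"
      unfolding N.indep_var_eq using rv1 rv2 by auto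
    then show ?thesis unfolding gV .
  qed
  show intP: "integrable N (\<lambda>\<omega>. f (P \<omega>)) \<longleftrightarrow> integrable (measure_pmf (poisson_pmf 1)) f" for f :: "nat \<Rightarrow> real"
    using integrable_distr_eq[OF P_rv, of f] P_poisson by simp
  show EP: "(\<integral>\<omega>. f (P \<omega>) \<partial>N) = EQ f" for f :: "nat \<Rightarrow> real"
    using integral_distr[OF P_rv, of f] P_poisson by simp
  show intS: "integrable N (\<lambda>\<omega>. real (S \<omega>))"
    unfolding S_def using Y_int by (auto simp: of_nat_sum intro!: Bochner_Integration.integrable_sum)
  have intPr: "integrable N (\<lambda>\<omega>. real (P \<omega>))"
    using intP[of real] Q_int_real by simp
  show intPS: "integrable N (\<lambda>\<omega>. real (P \<omega>) * real (S \<omega>))"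
    by (rule N.indep_var_integrable[OF ind intPr intS])
  assume cv: "convex_on UNIV \<psi>" and lg: "lg \<psi>"
  obtain A B where ab: "\<And>x. x \<ge> 0 \<Longrightarrow> \<bar>\<psi> x\<bar> \<le> A + B * x"
    using lg lg_bound by blast
  have PSm: "(\<lambda>\<omega>. real (P \<omega>) * real (S \<omega>)) \<in> borel_measurable N"
    using intPS by auto
  have intPsi: "integrable N (\<lambda>\<omega>. \<psi> (real (P \<omega>) * real (S \<omega>)))"
  proof (rule Bochner_Integration.integrable_bound)
    show "integrable N (\<lambda>\<omega>. \<bar>A\<bar> + \<bar>B\<bar> * (real (P \<omega>) * real (S \<omega>)))"
      using intPS by simp
    show "(\<lambda>\<omega>. \<psi> (real (P \<omega>) * real (S \<omega>))) \<in> borel_measurable N"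
      by (rule borel_measurable_continuous_on[OF convex_on_continuous[OF open_UNIV cv] PSm])
    show "AE \<omega> in N. norm (\<psi> (real (P \<omega>) * real (S \<omega>))) \<le> norm (\<bar>A\<bar> + \<bar>B\<bar> * (real (P \<omega>) * real (S \<omega>)))"
    proof (rule AE_I2)
      fix \<omega>
      define x where "x = real (P \<omega>) * real (S \<omega>)"
      have x0: "x \<ge> 0" by (simp add: x_def)
      have "\<bar>\<psi> x\<bar> \<le> A + B * x" by (rule ab[OF x0])
      also have "\<dots> \<le> \<bar>A\<bar> + \<bar>B\<bar> * x"
        using x0 by (intro add_mono mult_right_mono) auto
      finally show "norm (\<psi> (real (P \<omega>) * real (S \<omega>))) \<le> norm (\<bar>A\<bar> + \<bar>B\<bar> * (real (P \<omega>) * real (S \<omega>)))"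
        using x0 by (simp add: x_def)
    qed
  qed
  define l where "l = (\<integral>\<omega>. real (S \<omega>) \<partial>N)"
  have l0: "l \<ge> 0" unfolding l_def by (intro integral_nonneg_AE) auto
  define K where "K = nat \<lfloor>l\<rfloor>"
  have kK: "real_of_int \<lfloor>l\<rfloor> = real K" using l0 by (simp add: K_def)
  define k0 where "k0 = real K"
  define \<beta> where "\<beta> j = \<psi> ((k0 + 1) * real j) - \<psi> (k0 * real j)" for j :: nat
  define \<alpha> where "\<alpha> j = \<psi> (k0 * real j) - \<beta> j * k0" for j :: nat
  have k00: "k0 \<ge> 0" by (simp add: k0_def)
  have iG0: "integrable (measure_pmf (poisson_pmf 1)) (\<lambda>j. \<psi> (k0 * real j))"
    using EP_integrable_lg[OF lg, of 1 0 k0] k00 by simp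
  have iG1: "integrable (measure_pmf (poisson_pmf 1)) (\<lambda>j. \<psi> ((k0 + 1) * real j))"
    using EP_integrable_lg[OF lg, of 1 0 "k0 + 1"] k00 by simp
  have ib: "integrable (measure_pmf (poisson_pmf 1)) \<beta>"
    unfolding \<beta>_def[abs_def] using iG0 iG1 by auto
  have ia: "integrable (measure_pmf (poisson_pmf 1)) \<alpha>"
    unfolding \<alpha>_def[abs_def] using iG0 ib by auto
  have Eb: "EQ \<beta> = G \<psi> (k0 + 1) - G \<psi> k0"
    unfolding \<beta>_def[abs_def] G_def using iG0 iG1 by simp
  have Ea: "EQ \<alpha> = G \<psi> k0 - EQ \<beta> * k0"
    unfolding \<alpha>_def[abs_def] G_def using iG0 ib by simp
  have iaP: "integrable N (\<lambda>\<omega>. \<alpha> (P \<omega>))" using intP ia by simp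
  have ibP: "integrable N (\<lambda>\<omega>. \<beta> (P \<omega>))" using intP ib by simp
  have ibS: "integrable N (\<lambda>\<omega>. \<beta> (P \<omega>) * real (S \<omega>))"
    by (rule N.indep_var_integrable[OF ind ibP intS])
  have EbS: "(\<integral>\<omega>. \<beta> (P \<omega>) * real (S \<omega>) \<partial>N) = EQ \<beta> * l"
    using N.indep_var_lebesgue_integral[OF ind ibP intS] EP[of \<beta>] by (simp add: l_def)
  have pw: "\<alpha> j + \<beta> j * real s \<le> \<psi> (real j * real s)" for j s :: nat
  proof -
    have "s \<le> K \<or> K + 1 \<le> s" by linarith
    then have y: "real s \<le> k0 \<or> k0 + 1 \<le> real s" by (auto simp: k0_def)
    have "\<psi> (k0 * real j) + (\<psi> ((k0 + 1) * real j) - \<psi> (k0 * real j)) * (real s - k0) \<le> \<psi> (real s * real j)"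
      using chord1[OF convex_scale[OF cv, of "real j"] y] by simp
    then have h: "\<psi> (k0 * real j) + \<beta> j * (real s - k0) \<le> \<psi> (real s * real j)"
      by (simp add: \<beta>_def)
    have e1: "\<alpha> j + \<beta> j * real s = \<psi> (k0 * real j) + \<beta> j * (real s - k0)"
      unfolding \<alpha>_def by (simp add: algebra_simps)
    show ?thesis using h e1 by (simp add: mult.commute)
  qed
  have "glin \<psi> l = (1 - (l - k0)) * G \<psi> k0 + (l - k0) * G \<psi> (k0 + 1)"
    unfolding glin_def kK k0_def ..
  also have "\<dots> = EQ \<alpha> + EQ \<beta> * l"
    unfolding Ea Eb by (simp add: algebra_simps)
  also have "\<dots> = (\<integral>\<omega>. \<alpha> (P \<omega>) + \<beta> (P \<omega>) * real (S \<omega>) \<partial>N)"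
    using iaP ibS EbS EP[of \<alpha>] by simp
  also have "\<dots> \<le> (\<integral>\<omega>. \<psi> (real (P \<omega>) * real (S \<omega>)) \<partial>N)"
    using iaP ibS intPsi by (intro integral_mono pw) auto
  finally show "integrable N (\<lambda>\<omega>. \<psi> (real (P \<omega>) * real (S \<omega>))) \<and>
         glin \<psi> (\<integral>\<omega>. real (S \<omega>) \<partial>N) \<le> (\<integral>\<omega>. \<psi> (real (P \<omega>) * real (S \<omega>)) \<partial>N)"
    using intPsi by (simp add: l_def)
qed

lemma pow_le_fact_exp:
  fixes x :: real assumes x: "x \<ge> 0"
  shows "x ^ J \<le> fact J * exp x"
proof -
  have s: "(\<lambda>n. x ^ n /\<^sub>R fact n) sums exp x" by (rule exp_converges)
  have "sum (\<lambda>n. x ^ n /\<^sub>R fact n) {J} \<le> suminf (\<lambda>n. x ^ n /\<^sub>R fact n)"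
    using s x by (intro sum_le_suminf) (auto simp: sums_iff)
  then have "x ^ J / fact J \<le> exp x" using s by (simp add: sums_iff divide_inverse mult.commute)
  then show ?thesis by (simp add: divide_le_eq mult.commute)
qed

lemma Q_moment:
  assumes q: "q \<ge> 0"
  shows "integrable (measure_pmf (poisson_pmf 1)) (\<lambda>k. real k powr q)"
proof (rule Q_integrable_bound[where C="fact (nat \<lceil>q\<rceil>)" and x="exp 1"])
  fix k :: nat
  define J where "J = nat \<lceil>q\<rceil>"
  have "real k powr q \<le> fact J * exp 1 ^ k"
  proof (cases "k = 0")
    case True then show ?thesis by simp
  next
    case False
    then have k1: "1 \<le> real k" by simp
    have c0: "0 \<le> \<lceil>q\<rceil>" using q by simp
    have qJ: "q \<le> real J"
      unfolding J_def using c0 le_of_int_ceiling[of q] by simp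
    have "real k powr q \<le> real k powr (real J)"
      using k1 qJ by (intro powr_mono) auto
    also have "\<dots> = real k ^ J" using k1 by (simp add: powr_realpow)
    also have "\<dots> \<le> fact J * exp (real k)" by (rule pow_le_fact_exp) simp
    also have "exp (real k) = exp 1 ^ k" using exp_of_nat_mult[of k 1] by simp
    finally show ?thesis .
  qed
  then show "\<bar>real k powr q\<bar> \<le> fact (nat \<lceil>q\<rceil>) * exp 1 ^ k" by (simp add: J_def)
qed simp

lemma convex_abs_powr:
  assumes q: "q \<ge> 1"
  shows "convex_on UNIV (\<lambda>x::real. \<bar>x\<bar> powr q)"
proof (rule convex_onI)
  fix t x y :: real assume t: "0 < t" "t < 1"
  define a b where "a = \<bar>x\<bar>" and "b = \<bar>y\<bar>"
  have ab: "a \<ge> 0" "b \<ge> 0" by (auto simp: a_def b_def)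
  have "\<bar>(1 - t) *\<^sub>R x + t *\<^sub>R y\<bar> \<le> (1 - t) * a + t * b"
    using t unfolding a_def b_def by (simp add: abs_triangle_ineq[THEN order_trans] abs_mult)
  then have 1: "\<bar>(1 - t) *\<^sub>R x + t *\<^sub>R y\<bar> powr q \<le> ((1 - t) * a + t * b) powr q"
    using q by (intro powr_mono2) auto
  have 2: "((1 - t) * a + t * b) powr q \<le> (1 - t) * a powr q + t * b powr q"
  proof (cases "a = 0")
    case True
    have "(t * b) powr q = t powr q * b powr q" using t ab by (simp add: powr_mult)
    also have "\<dots> \<le> t powr 1 * b powr q"
      using t q by (intro mult_right_mono powr_mono') auto
    finally show ?thesis using True t by simp
  next
    case a: False
    show ?thesis
    proof (cases "b = 0")
      case True
      have "((1 - t) * a) powr q = (1 - t) powr q * a powr q" using t ab by (simp add: powr_mult)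
      also have "\<dots> \<le> (1 - t) powr 1 * a powr q"
        using t q by (intro mult_right_mono powr_mono') auto
      finally show ?thesis using True t by simp
    next
      case False
      have "a > 0" "b > 0" using a False ab by auto
      then show ?thesis
        using convex_onD[OF powr_convex[OF q], of t a b] t by auto
    qed
  qed
  from 1 2 show "\<bar>(1 - t) *\<^sub>R x + t *\<^sub>R y\<bar> powr q \<le> (1 - t) * \<bar>x\<bar> powr q + t * \<bar>y\<bar> powr q"
    unfolding a_def b_def by linarith
qed simp

definition Lc :: "(real \<Rightarrow> real) \<Rightarrow> nat \<Rightarrow> real \<Rightarrow> real" where
  "Lc \<phi> j x = \<phi> (real j) + (\<phi> (real j + 1) - \<phi> (real j)) * (x - real j)"

definition trunc :: "(real \<Rightarrow> real) \<Rightarrow> nat \<Rightarrow> real \<Rightarrow> real" where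
  "trunc \<phi> n x = Max ((\<lambda>j. Lc \<phi> j x) ` {..n})"

lemma trunc_in: "\<exists>j\<le>n. trunc \<phi> n x = Lc \<phi> j x"
proof -
  have "trunc \<phi> n x \<in> (\<lambda>j. Lc \<phi> j x) ` {..n}"
    unfolding trunc_def by (rule Max_in) auto
  then show ?thesis by auto
qed

lemma trunc_ge: "j \<le> n \<Longrightarrow> Lc \<phi> j x \<le> trunc \<phi> n x"
  unfolding trunc_def by (rule Max_ge) auto

lemma Lc_affine: "Lc \<phi> j ((1 - t) *\<^sub>R x + t *\<^sub>R y) = (1 - t) * Lc \<phi> j x + t * Lc \<phi> j y"
  unfolding Lc_def by (simp add: algebra_simps)

lemma trunc_convex: "convex_on UNIV (trunc \<phi> n)"
proof (rule convex_onI)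
  fix t x y :: real assume t: "0 < t" "t < 1"
  obtain j where j: "j \<le> n" "trunc \<phi> n ((1 - t) *\<^sub>R x + t *\<^sub>R y) = Lc \<phi> j ((1 - t) *\<^sub>R x + t *\<^sub>R y)"
    using trunc_in by blast
  have "Lc \<phi> j ((1 - t) *\<^sub>R x + t *\<^sub>R y) = (1 - t) * Lc \<phi> j x + t * Lc \<phi> j y"
    by (rule Lc_affine)
  also have "\<dots> \<le> (1 - t) * trunc \<phi> n x + t * trunc \<phi> n y"
    using t trunc_ge[OF j(1)] by (intro add_mono mult_left_mono) auto
  finally show "trunc \<phi> n ((1 - t) *\<^sub>R x + t *\<^sub>R y) \<le> (1 - t) * trunc \<phi> n x + t * trunc \<phi> n y"
    using j(2) by simp
qed simp

lemma trunc_lg: "lg (trunc \<phi> n)"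
proof -
  define c where "c j = \<bar>\<phi> (real j)\<bar> + \<bar>\<phi> (real j + 1) - \<phi> (real j)\<bar> * real j" for j
  define e where "e j = \<bar>\<phi> (real j + 1) - \<phi> (real j)\<bar>" for j
  have bL: "\<bar>Lc \<phi> j x\<bar> \<le> c j + e j * x" if "x \<ge> 0" for j x
  proof -
    have "\<bar>Lc \<phi> j x\<bar> \<le> \<bar>\<phi> (real j)\<bar> + \<bar>\<phi> (real j + 1) - \<phi> (real j)\<bar> * \<bar>x - real j\<bar>"
      unfolding Lc_def by (metis abs_mult abs_triangle_ineq)
    also have "\<bar>x - real j\<bar> \<le> x + real j" using that by simp
    then have "\<bar>\<phi> (real j + 1) - \<phi> (real j)\<bar> * \<bar>x - real j\<bar> \<le> \<bar>\<phi> (real j + 1) - \<phi> (real j)\<bar> * (x + real j)"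
      by (intro mult_left_mono) auto
    finally show ?thesis unfolding c_def e_def by (simp add: algebra_simps)
  qed
  have "\<bar>trunc \<phi> n x\<bar> \<le> (\<Sum>j\<le>n. c j) + (\<Sum>j\<le>n. e j) * x" if x: "x \<ge> 0" for x
  proof -
    obtain j where j: "j \<le> n" "trunc \<phi> n x = Lc \<phi> j x" using trunc_in by blast
    have "\<bar>trunc \<phi> n x\<bar> \<le> c j + e j * x" using j bL[OF x] by simp
    also have "\<dots> \<le> (\<Sum>j\<le>n. c j + e j * x)"
      using j x by (intro member_le_sum) (auto simp: c_def e_def)
    also have "\<dots> = (\<Sum>j\<le>n. c j) + (\<Sum>j\<le>n. e j) * x"
      by (simp add: sum.distrib sum_distrib_right)
    finally show ?thesis .
  qed
  then show ?thesis unfolding lg_def by blast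
qed

lemma Lc_le:
  assumes cv: "convex_on UNIV \<phi>"
  shows "Lc \<phi> j (real m) \<le> \<phi> (real m)"
proof -
  have "m \<le> j \<or> j + 1 \<le> m" by linarith
  then have "real m \<le> real j \<or> real j + 1 \<le> real m" by auto
  then show ?thesis unfolding Lc_def using chord1[OF cv] by blast
qed

lemma trunc_le:
  assumes cv: "convex_on UNIV \<phi>"
  shows "trunc \<phi> n (real m) \<le> \<phi> (real m)"
  using trunc_in[of n \<phi> "real m"] Lc_le[OF cv] by force

lemma trunc_eq:
  assumes cv: "convex_on UNIV \<phi>" and k: "k \<le> n"
  shows "trunc \<phi> n (real k) = \<phi> (real k)"
proof -
  have "\<phi> (real k) = Lc \<phi> k (real k)" by (simp add: Lc_def)
  also have "\<dots> \<le> trunc \<phi> n (real k)" by (rule trunc_ge[OF k])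
  finally show ?thesis using trunc_le[OF cv, of n k] by simp
qed

lemma sum01:
  fixes X :: "nat \<Rightarrow> real"
  assumes "\<And>i. i < n \<Longrightarrow> X i \<in> {0, 1}"
  shows "\<exists>k\<le>n. (\<Sum>i<n. X i) = real k"
  using assms
proof (induction n)
  case 0 then show ?case by simp
next
  case (Suc n)
  then obtain k where k: "k \<le> n" "(\<Sum>i<n. X i) = real k" by auto
  have "X n = 0 \<or> X n = 1" using Suc.prems[of n] by auto
  then show ?case
  proof
    assume "X n = 0" then show ?thesis using k by (intro exI[of _ k]) auto
  next
    assume "X n = 1" then show ?thesis using k by (intro exI[of _ "Suc k"]) auto
  qed
qed

theorem corollary3:
  fixes M :: "'a measure" and N :: "'b measure"
    and X :: "nat \<Rightarrow> 'a \<Rightarrow> real"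
    and Y :: "nat \<Rightarrow> 'b \<Rightarrow> nat" and P :: "'b \<Rightarrow> nat" and n :: nat
  assumes "prob_space M" and "prob_space N"
    and X_rv: "\<And>i. i < n \<Longrightarrow> X i \<in> borel_measurable M"
    and X_01: "\<And>i \<omega>. i < n \<Longrightarrow> \<omega> \<in> space M \<Longrightarrow> X i \<omega> \<in> {0, 1}"
    and X_indep: "prob_space.indep_vars M (\<lambda>_. borel) X {..<n}"
    and Y_rv: "\<And>i. i < n \<Longrightarrow> Y i \<in> measurable N (count_space UNIV)"
    and Y_int: "\<And>i. i < n \<Longrightarrow> integrable N (\<lambda>\<omega>. real (Y i \<omega>))"
    and mean_eq: "\<And>i. i < n \<Longrightarrow> (\<integral>\<omega>. X i \<omega> \<partial>M) = (\<integral>\<omega>. real (Y i \<omega>) \<partial>N)"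
    and P_rv: "P \<in> measurable N (count_space UNIV)"
    and P_poisson: "distr N (count_space UNIV) P = measure_pmf (poisson_pmf 1)"
    and P_indep: "prob_space.indep_set N
                    (sets (vimage_algebra (space N) P (count_space UNIV)))
                    (sets (vimage_algebra (space N) (\<lambda>\<omega>. \<lambda>i\<in>{..<n}. Y i \<omega>)
                       (PiM {..<n} (\<lambda>_. count_space UNIV))))"
  shows "cx_le M (\<lambda>\<omega>. \<Sum>i<n. X i \<omega>) N (\<lambda>\<omega>. real (P \<omega>) * real (\<Sum>i<n. Y i \<omega>))
       \<and> (\<forall>q::real. q \<ge> 1 \<longrightarrow> integrable N (\<lambda>\<omega>. real (\<Sum>i<n. Y i \<omega>) powr q) \<longrightarrow>
            (\<integral>\<omega>. \<bar>\<Sum>i<n. X i \<omega>\<bar> powr q \<partial>M) powr (1/q)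
              \<le> A_q q powr (1/q) * (\<integral>\<omega>. real (\<Sum>i<n. Y i \<omega>) powr q \<partial>N) powr (1/q))"
proof -
  interpret M: prob_space M by fact
  interpret N: prob_space N by fact
  have NS6: "\<And>\<psi>. convex_on UNIV \<psi> \<Longrightarrow> lg \<psi> \<Longrightarrow>
         integrable N (\<lambda>\<omega>. \<psi> (real (P \<omega>) * real (\<Sum>i<n. Y i \<omega>))) \<and>
         glin \<psi> (\<integral>\<omega>. real (\<Sum>i<n. Y i \<omega>) \<partial>N) \<le> (\<integral>\<omega>. \<psi> (real (P \<omega>) * real (\<Sum>i<n. Y i \<omega>)) \<partial>N)"
    by (rule Nside(6)[OF assms(2)]) (use Y_rv Y_int P_rv P_poisson P_indep in auto)
  have NS3: "\<And>f. N.indep_var borel (\<lambda>\<omega>. f (P \<omega>) :: real) borel (\<lambda>\<omega>. real (\<Sum>i<n. Y i \<omega>))"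
    by (rule Nside(3)[OF assms(2)]) (use Y_rv Y_int P_rv P_poisson P_indep in auto)
  have NS4: "\<And>f. integrable N (\<lambda>\<omega>. f (P \<omega>)) \<longleftrightarrow> integrable (measure_pmf (poisson_pmf 1)) (f :: nat \<Rightarrow> real)"
    by (rule Nside(4)[OF assms(2)]) (use Y_rv Y_int P_rv P_poisson P_indep in auto)
  have NS5: "\<And>f. (\<integral>\<omega>. f (P \<omega>) \<partial>N) = EQ (f :: nat \<Rightarrow> real)"
    by (rule Nside(5)[OF assms(2)]) (use Y_rv Y_int P_rv P_poisson P_indep in auto)
  have lam: "(\<Sum>i<n. \<integral>\<omega>. X i \<omega> \<partial>M) = (\<integral>\<omega>. real (\<Sum>i<n. Y i \<omega>) \<partial>N)"
    using Y_int mean_eq by (simp add: of_nat_sum Bochner_Integration.integral_sum)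
  have lam0: "(\<Sum>i<n. \<integral>\<omega>. X i \<omega> \<partial>M) \<ge> 0"
    unfolding lam by (intro integral_nonneg_AE AE_I2) (simp only: of_nat_0_le_iff)
  have cx: "cx_le M (\<lambda>\<omega>. \<Sum>i<n. X i \<omega>) N (\<lambda>\<omega>. real (P \<omega>) * real (\<Sum>i<n. Y i \<omega>))"
    unfolding cx_le_def
  proof (intro allI impI)
    fix \<phi> :: "real \<Rightarrow> real"
    assume cv: "convex_on UNIV \<phi>"
      and iM: "integrable M (\<lambda>\<omega>. \<phi> (\<Sum>i<n. X i \<omega>))"
      and iN: "integrable N (\<lambda>\<omega>. \<phi> (real (P \<omega>) * real (\<Sum>i<n. Y i \<omega>)))"
    define \<psi> where "\<psi> = trunc \<phi> n"
    have cvp: "convex_on UNIV \<psi>" unfolding \<psi>_def by (rule trunc_convex)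
    have lgp: "lg \<psi>" unfolding \<psi>_def by (rule trunc_lg)
    have "(\<integral>\<omega>. \<phi> (\<Sum>i<n. X i \<omega>) \<partial>M) = (\<integral>\<omega>. \<psi> (\<Sum>i<n. X i \<omega>) \<partial>M)"
    proof (rule Bochner_Integration.integral_cong[OF refl])
      fix \<omega> assume \<omega>: "\<omega> \<in> space M"
      obtain k where k: "k \<le> n" "(\<Sum>i<n. X i \<omega>) = real k"
        using sum01[of n "\<lambda>i. X i \<omega>"] X_01 \<omega> by blast
      show "\<phi> (\<Sum>i<n. X i \<omega>) = \<psi> (\<Sum>i<n. X i \<omega>)"
        unfolding k(2) \<psi>_def using trunc_eq[OF cv k(1)] by simp
    qed
    also have "\<dots> \<le> u \<psi> (\<Sum>i<n. \<integral>\<omega>. X i \<omega> \<partial>M)"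
      by (rule Mside[OF assms(1) X_rv X_01 X_indep order_refl cvp lgp])
    also have "\<dots> \<le> glin \<psi> (\<Sum>i<n. \<integral>\<omega>. X i \<omega> \<partial>M)"
      by (rule glin_bound[OF cvp lgp lam0])
    also have "\<dots> = glin \<psi> (\<integral>\<omega>. real (\<Sum>i<n. Y i \<omega>) \<partial>N)"
      unfolding lam ..
    also have "\<dots> \<le> (\<integral>\<omega>. \<psi> (real (P \<omega>) * real (\<Sum>i<n. Y i \<omega>)) \<partial>N)"
      using NS6[OF cvp lgp] by blast
    also have "\<dots> \<le> (\<integral>\<omega>. \<phi> (real (P \<omega>) * real (\<Sum>i<n. Y i \<omega>)) \<partial>N)"
      using NS6[OF cvp lgp] iN
    proof (intro integral_mono)
      fix \<omega>
      show "\<psi> (real (P \<omega>) * real (\<Sum>i<n. Y i \<omega>)) \<le> \<phi> (real (P \<omega>) * real (\<Sum>i<n. Y i \<omega>))"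
        using trunc_le[OF cv, of n "P \<omega> * (\<Sum>i<n. Y i \<omega>)"] unfolding \<psi>_def by simp
    qed auto
    finally show "(\<integral>\<omega>. \<phi> (\<Sum>i<n. X i \<omega>) \<partial>M) \<le> (\<integral>\<omega>. \<phi> (real (P \<omega>) * real (\<Sum>i<n. Y i \<omega>)) \<partial>N)" .
  qed
  moreover have "\<forall>q::real. q \<ge> 1 \<longrightarrow> integrable N (\<lambda>\<omega>. real (\<Sum>i<n. Y i \<omega>) powr q) \<longrightarrow>
            (\<integral>\<omega>. \<bar>\<Sum>i<n. X i \<omega>\<bar> powr q \<partial>M) powr (1/q)
              \<le> A_q q powr (1/q) * (\<integral>\<omega>. real (\<Sum>i<n. Y i \<omega>) powr q \<partial>N) powr (1/q)"
  proof (intro allI impI)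
    fix q :: real
    assume q: "q \<ge> 1" and iS: "integrable N (\<lambda>\<omega>. real (\<Sum>i<n. Y i \<omega>) powr q)"
    define I where "I = (\<integral>\<omega>. real (\<Sum>i<n. Y i \<omega>) powr q \<partial>N)"
    have cvq: "convex_on UNIV (\<lambda>x::real. \<bar>x\<bar> powr q)" by (rule convex_abs_powr[OF q])
    have sm: "(\<lambda>\<omega>. \<Sum>i<n. X i \<omega>) \<in> borel_measurable M"
      using X_rv by auto
    have iM: "integrable M (\<lambda>\<omega>. \<bar>\<Sum>i<n. X i \<omega>\<bar> powr q)"
    proof (rule M.integrable_const_bound[where B="real n powr q"])
      show "AE \<omega> in M. norm (\<bar>\<Sum>i<n. X i \<omega>\<bar> powr q) \<le> real n powr q"
      proof (rule AE_I2)
        fix \<omega> assume \<omega>: "\<omega> \<in> space M"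
        obtain k where k: "k \<le> n" "(\<Sum>i<n. X i \<omega>) = real k"
          using sum01[of n "\<lambda>i. X i \<omega>"] X_01 \<omega> by blast
        show "norm (\<bar>\<Sum>i<n. X i \<omega>\<bar> powr q) \<le> real n powr q"
          unfolding k(2) using k(1) q by (simp add: powr_mono2)
      qed
      show "(\<lambda>\<omega>. \<bar>\<Sum>i<n. X i \<omega>\<bar> powr q) \<in> borel_measurable M"
        using borel_measurable_continuous_on[OF convex_cont[OF cvq] sm] .
    qed
    have iPq: "integrable N (\<lambda>\<omega>. real (P \<omega>) powr q)"
      using NS4[of "\<lambda>j. real j powr q"] Q_moment[of q] q by simp
    have pm: "(\<lambda>x::real. x powr q) \<in> borel_measurable borel" by measurable
    have indq: "N.indep_var borel (\<lambda>\<omega>. real (P \<omega>) powr q) borel (\<lambda>\<omega>. real (\<Sum>i<n. Y i \<omega>) powr q)"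
      using N.indep_var_compose[OF NS3[of "\<lambda>j. real j powr q"] measurable_ident pm]
      by (simp add: comp_def)
    have eq: "(\<lambda>\<omega>. \<bar>real (P \<omega>) * real (\<Sum>i<n. Y i \<omega>)\<bar> powr q)
        = (\<lambda>\<omega>. real (P \<omega>) powr q * real (\<Sum>i<n. Y i \<omega>) powr q)"
      by (simp add: powr_mult abs_mult del: of_nat_sum)
    have iN: "integrable N (\<lambda>\<omega>. \<bar>real (P \<omega>) * real (\<Sum>i<n. Y i \<omega>)\<bar> powr q)"
      unfolding eq by (rule N.indep_var_integrable[OF indq iPq iS])
    have EN: "(\<integral>\<omega>. \<bar>real (P \<omega>) * real (\<Sum>i<n. Y i \<omega>)\<bar> powr q \<partial>N) = A_q q * I"
      unfolding eq N.indep_var_lebesgue_integral[OF indq iPq iS] I_def A_q_def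
      using NS5[of "\<lambda>j. real j powr q"] by simp
    have le: "(\<integral>\<omega>. \<bar>\<Sum>i<n. X i \<omega>\<bar> powr q \<partial>M) \<le> A_q q * I"
      using cx[unfolded cx_le_def, rule_format, OF cvq iM iN] EN by simp
    have A0: "A_q q \<ge> 0" unfolding A_q_def by (intro integral_nonneg_AE) auto
    have I0: "I \<ge> 0" unfolding I_def by (intro integral_nonneg_AE) auto
    have L0: "(\<integral>\<omega>. \<bar>\<Sum>i<n. X i \<omega>\<bar> powr q \<partial>M) \<ge> 0" by (intro integral_nonneg_AE) auto
    have "(\<integral>\<omega>. \<bar>\<Sum>i<n. X i \<omega>\<bar> powr q \<partial>M) powr (1/q) \<le> (A_q q * I) powr (1/q)"
      using le L0 q by (intro powr_mono2) auto
    also have "\<dots> = A_q q powr (1/q) * I powr (1/q)"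
      using A0 I0 by (simp add: powr_mult)
    finally show "(\<integral>\<omega>. \<bar>\<Sum>i<n. X i \<omega>\<bar> powr q \<partial>M) powr (1/q)
              \<le> A_q q powr (1/q) * (\<integral>\<omega>. real (\<Sum>i<n. Y i \<omega>) powr q \<partial>N) powr (1/q)"
      unfolding I_def .
  qed
  ultimately show ?thesis by blast
qed

end
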